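(* Let $p$ be an odd prime and $G$ a finite $p$-group with cyclic commutator subgroup. Write $|G'|=p^m$ and $|G'\cap \mathrm{Z}(G)|=p^t$. Then ${\rm C}_G(G')=\{g\in G: g^{p^t}\in \mathrm{Z}(G)G'\}$ and ${\rm C}_G(G')'=\mho_{m-t}(G')$. Moreover, for every subgroup $N$ of $G$ contained in ${\rm C}_G(G')$ one has $\exp(N)=p^{\min\{n : {\mathrm D}_{p^n}(N)=1\}}$.
   Context: $\mathrm{Z}(G)$ is the center; $\mho_j(X)=\langle x^{p^j}:x\in X\rangle$. The Jennings series of a finite $p$-group $N$ is ${\mathrm D}_n(N)=\prod_{ip^j\ge n}\mho_j(\gamma_i(N))$, with $\gamma_i$ the lower central series. *)

theory Defs
  imports "HOL-Algebra.Algebra"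
begin

definition center :: "('a, 'b) monoid_scheme \<Rightarrow> 'a set" where
  "center G = {z \<in> carrier G. \<forall>g \<in> carrier G. z \<otimes>\<^bsub>G\<^esub> g = g \<otimes>\<^bsub>G\<^esub> z}"

definition centralizer :: "('a, 'b) monoid_scheme \<Rightarrow> 'a set \<Rightarrow> 'a set" where
  "centralizer G H = {g \<in> carrier G. \<forall>h \<in> H. g \<otimes>\<^bsub>G\<^esub> h = h \<otimes>\<^bsub>G\<^esub> g}"

definition comm_subgroup :: "('a, 'b) monoid_scheme \<Rightarrow> 'a set \<Rightarrow> 'a set \<Rightarrow> 'a set" where
  "comm_subgroup G A B = generate G
     {a \<otimes>\<^bsub>G\<^esub> b \<otimes>\<^bsub>G\<^esub> inv\<^bsub>G\<^esub> a \<otimes>\<^bsub>G\<^esub> inv\<^bsub>G\<^esub> b | a b. a \<in> A \<and> b \<in> B}"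

text \<open>Lower central series of N: gamma_1(N) = N, gamma_(i+1)(N) = [gamma_i(N), N].
  (Index 0 is set to N as well; it is never used below.)\<close>
fun lcs :: "('a, 'b) monoid_scheme \<Rightarrow> 'a set \<Rightarrow> nat \<Rightarrow> 'a set" where
  "lcs G N 0 = N"
| "lcs G N (Suc 0) = N"
| "lcs G N (Suc (Suc i)) = comm_subgroup G (lcs G N (Suc i)) N"

definition mho :: "('a, 'b) monoid_scheme \<Rightarrow> nat \<Rightarrow> nat \<Rightarrow> 'a set \<Rightarrow> 'a set" where
  "mho G p j S = generate G {x [^]\<^bsub>G\<^esub> (p ^ j) | x. x \<in> S}"

definition jennings :: "('a, 'b) monoid_scheme \<Rightarrow> nat \<Rightarrow> 'a set \<Rightarrow> nat \<Rightarrow> 'a set" where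
  "jennings G p N n = generate G (\<Union>{mho G p j (lcs G N i) | i j. 1 \<le> i \<and> n \<le> i * p ^ j})"

definition group_exponent :: "('a, 'b) monoid_scheme \<Rightarrow> 'a set \<Rightarrow> nat" where
  "group_exponent G H = (LEAST e. 0 < e \<and> (\<forall>x \<in> H. x [^]\<^bsub>G\<^esub> e = \<one>\<^bsub>G\<^esub>))"

end

theory Submission
  imports Defs "HOL-Number_Theory.Number_Theory"
begin
fun gs :: "nat \<Rightarrow> nat \<Rightarrow> nat" where
  "gs q 0 = 0"
| "gs q (Suc n) = 1 + q * gs q n"

lemma gs_add: "gs q (a + b) = gs q a + q ^ a * gs q b"
  by (induction a) (auto simp: algebra_simps)

lemma gs_mult: "gs q (a * b) = gs q a * gs (q ^ a) b"
proof (induction b)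
  case 0 then show ?case by simp
next
  case (Suc b)
  have "gs q (a * Suc b) = gs q (a + a * b)" by (simp add: algebra_simps)
  also have "\<dots> = gs q a + q ^ a * gs q (a * b)" by (rule gs_add)
  also have "\<dots> = gs q a * gs (q ^ a) (Suc b)" using Suc by (simp add: algebra_simps)
  finally show ?case .
qed

lemma gs_one [simp]: "gs 1 n = n"
  by (induction n) auto

lemma gs_geom: "1 \<le> q \<Longrightarrow> (q - 1) * gs q n = q ^ n - 1"
proof (induction n)
  case 0 then show ?case by simp
next
  case (Suc n)
  have "(q - 1) * gs q (Suc n) = (q - 1) + q * ((q - 1) * gs q n)" by (simp add: algebra_simps)
  also have "\<dots> = (q - 1) + q * (q ^ n - 1)" using Suc by simp
  also have "\<dots> = q ^ Suc n - 1"
  proof -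
    have a: "1 \<le> q ^ n" using Suc(2) by simp
    have b: "q \<le> q ^ Suc n" using Suc(2) a by simp
    have "q * (q ^ n - 1) = q ^ Suc n - q" by (simp add: right_diff_distrib')
    thus ?thesis using b Suc(2) by simp
  qed
  finally show ?case .
qed

lemma gs_p_aux:
  fixes q z :: nat and p :: nat
  assumes "q = 1 + p * z"
  shows "\<exists>K::int. 2 * int (gs q n) = 2 * int n + int p * int z * (int n * (int n - 1)) + (int p)^2 * K"
proof (induction n)
  case 0 then show ?case by (intro exI[of _ 0]) simp
next
  case (Suc n)
  then obtain K where K: "2 * int (gs q n) = 2 * int n + int p * int z * (int n * (int n - 1)) + (int p)^2 * K" by blast
  have qi: "int q = 1 + int p * int z" using assms by simp
  have e: "2 * int (gs q (Suc n)) = 2 + int q * (2 * int (gs q n))" by (simp add: algebra_simps)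
  have "2 * int (gs q (Suc n)) = 2 * int (Suc n) + int p * int z * (int (Suc n) * (int (Suc n) - 1))
      + (int p)^2 * (int z ^ 2 * (int n * (int n - 1)) + int q * K)"
    unfolding e K qi by (simp add: algebra_simps power2_eq_square)
  then show ?case by blast
qed

lemma gs_p:
  fixes p q :: nat
  assumes p: "Factorial_Ring.prime p" "odd p" and q: "q mod p = 1"
  shows "\<exists>w. gs q p = p * w \<and> \<not> p dvd w"
proof -
  have p1: "p > 1" using p prime_gt_1_nat by blast
  define z where "z = q div p"
  have qz: "q = 1 + p * z" using div_mult_mod_eq[of q p] q unfolding z_def by (simp add: mult.commute)
  obtain K where K: "2 * int (gs q p) = 2 * int p + int p * int z * (int p * (int p - 1)) + (int p)^2 * K"
    using gs_p_aux[OF qz] by blast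
  obtain j where j: "p = 2 * j + 1" using p(2) oddE by blast
  have hj: "int p - 1 = 2 * int j" using j by simp
  have e1: "2 * int (gs q p) = 2 * int p + (int p)^2 * (2 * int z * int j + K)"
    unfolding K hj by (simp add: algebra_simps power2_eq_square)
  have "(int p)^2 * K = 2 * (int (gs q p) - int p - (int p)^2 * int z * int j)"
    using e1 by (simp add: algebra_simps)
  hence "even ((int p)^2 * K)" by simp
  moreover have "odd ((int p)^2)" using p(2) by simp
  ultimately have "even K" by (simp add: even_mult_iff)
  then obtain L where L: "K = 2 * L" by blast
  define W where "W = 1 + int p * (int z * int j + L)"
  have G: "int (gs q p) = int p * W"
    using e1 unfolding L W_def by (simp add: algebra_simps power2_eq_square)
  have "int p dvd int (gs q p)" using G by simp
  hence "p dvd gs q p" by simp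
  then obtain w where w: "gs q p = p * w" by blast
  moreover have "\<not> p dvd w"
  proof
    assume "p dvd w"
    hence "int p * int p dvd int (gs q p)" using w by simp
    hence "int p * int p dvd int p * W" using G by simp
    hence "int p dvd W" using p1 by simp
    hence "int p dvd 1" unfolding W_def by (simp add: dvd_add_left_iff)
    thus False using p1 by simp
  qed
  ultimately show ?thesis by blast
qed

lemma gs_ppow:
  fixes p q :: nat
  assumes p: "Factorial_Ring.prime p" "odd p" and q: "q mod p = 1"
  shows "\<exists>w. gs q (p ^ k) = p ^ k * w \<and> \<not> p dvd w"
proof (induction k)
  case 0 then show ?case using prime_gt_1_nat[OF p(1)] by (intro exI[of _ 1]) simp
next
  case (Suc k)
  then obtain w1 where w1: "gs q (p ^ k) = p ^ k * w1" "\<not> p dvd w1" by blast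
  have "(q ^ (p ^ k)) mod p = ((q mod p) ^ (p ^ k)) mod p" by (simp add: power_mod)
  hence "(q ^ (p ^ k)) mod p = 1" using q prime_gt_1_nat[OF p(1)] by simp
  then obtain w2 where w2: "gs (q ^ (p ^ k)) p = p * w2" "\<not> p dvd w2" using gs_p[OF p] by blast
  have "gs q (p ^ Suc k) = gs q (p ^ k * p)" by (simp add: mult.commute)
  also have "\<dots> = p ^ Suc k * (w1 * w2)" unfolding gs_mult w1 w2 by (simp add: algebra_simps)
  finally show ?case using w1 w2 p(1) by (metis prime_dvd_mult_iff)
qed

lemma fermat_pow:
  fixes p a :: nat
  assumes "Factorial_Ring.prime p"
  shows "[a ^ (p ^ k) = a] (mod p)"
proof (induction k)
  case 0 then show ?case by simp
next
  case (Suc k)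
  have ap: "[b ^ p = b] (mod p)" for b :: nat
  proof (cases "p dvd b")
    case True
    moreover have "p dvd b ^ p"
    proof -
      have "b ^ p = b * b ^ (p - 1)" using prime_gt_0_nat[OF assms]
        by (simp add: power_eq_if)
      thus ?thesis using True by simp
    qed
    ultimately show ?thesis by (simp add: cong_def)
  next
    case False
    have "[b ^ (p - 1) = 1] (mod p)" using fermat_theorem[OF assms False] .
    hence "[b * b ^ (p - 1) = b * 1] (mod p)" by (rule cong_scalar_left)
    moreover have "b * b ^ (p - 1) = b ^ p" using assms
      by (metis power_Suc prime_gt_0_nat Suc_diff_1)
    ultimately show ?thesis by simp
  qed
  have "a ^ (p ^ Suc k) = (a ^ (p ^ k)) ^ p" by (simp add: power_mult[symmetric] mult.commute)
  moreover have "[(a ^ (p ^ k)) ^ p = a ^ (p ^ k)] (mod p)" by (rule ap)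
  ultimately show ?case using cong_trans[OF _ Suc] by simp
qed

context group begin

lemma sub_pow_closed: "subgroup H G \<Longrightarrow> h \<in> H \<Longrightarrow> h [^] (k::nat) \<in> H"
  by (induction k) (auto simp: subgroup.one_closed subgroup.m_closed)

lemma lcomm: "a \<otimes> b = b \<otimes> a \<Longrightarrow> a \<in> carrier G \<Longrightarrow> b \<in> carrier G \<Longrightarrow> z \<in> carrier G
  \<Longrightarrow> a \<otimes> (b \<otimes> z) = b \<otimes> (a \<otimes> z)"
  by (simp add: m_assoc[symmetric])

lemma comm_inv_left: "a \<otimes> b = b \<otimes> a \<Longrightarrow> a \<in> carrier G \<Longrightarrow> b \<in> carrier G \<Longrightarrow> inv a \<otimes> b = b \<otimes> inv a"
proof -
  assume e: "a \<otimes> b = b \<otimes> a" and ab: "a \<in> carrier G" "b \<in> carrier G"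
  have "inv a \<otimes> b = inv a \<otimes> (b \<otimes> a) \<otimes> inv a" using ab by (simp add: m_assoc)
  also have "\<dots> = inv a \<otimes> (a \<otimes> b) \<otimes> inv a" using e by simp
  also have "\<dots> = b \<otimes> inv a" using ab by (simp add: m_assoc[symmetric])
  finally show ?thesis .
qed

lemma comm_inv_right: "a \<otimes> b = b \<otimes> a \<Longrightarrow> a \<in> carrier G \<Longrightarrow> b \<in> carrier G \<Longrightarrow> a \<otimes> inv b = inv b \<otimes> a"
  using comm_inv_left[of b a] by simp

lemma cancel1: "a \<in> carrier G \<Longrightarrow> z \<in> carrier G \<Longrightarrow> a \<otimes> (inv a \<otimes> z) = z"
  by (simp add: m_assoc[symmetric])

lemma cancel2: "a \<in> carrier G \<Longrightarrow> z \<in> carrier G \<Longrightarrow> inv a \<otimes> (a \<otimes> z) = z"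
  by (simp add: m_assoc[symmetric])

lemma conj_mult: "h \<in> carrier G \<Longrightarrow> x \<in> carrier G \<Longrightarrow> y \<in> carrier G \<Longrightarrow>
  h \<otimes> (x \<otimes> y) \<otimes> inv h = (h \<otimes> x \<otimes> inv h) \<otimes> (h \<otimes> y \<otimes> inv h)"
  by (simp add: m_assoc cancel2)

lemma conj_pow: "h \<in> carrier G \<Longrightarrow> x \<in> carrier G \<Longrightarrow>
  (h \<otimes> x \<otimes> inv h) [^] (k::nat) = h \<otimes> x [^] k \<otimes> inv h"
proof (induction k)
  case 0 then show ?case by (simp add: m_assoc)
next
  case (Suc k)
  have "(h \<otimes> x \<otimes> inv h) [^] Suc k = (h \<otimes> x [^] k \<otimes> inv h) \<otimes> (h \<otimes> x \<otimes> inv h)"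
    using Suc by simp
  also have "\<dots> = h \<otimes> (x [^] k \<otimes> x) \<otimes> inv h" using Suc(2,3) by (simp add: conj_mult)
  finally show ?case by simp
qed

lemma conj_inv: "h \<in> carrier G \<Longrightarrow> x \<in> carrier G \<Longrightarrow>
  inv (h \<otimes> x \<otimes> inv h) = h \<otimes> inv x \<otimes> inv h"
  by (simp add: inv_mult_group m_assoc)

lemma conj_eq_comm: "h \<in> carrier G \<Longrightarrow> x \<in> carrier G \<Longrightarrow> h \<otimes> x \<otimes> inv h = x \<Longrightarrow> h \<otimes> x = x \<otimes> h"
proof -
  assume a: "h \<in> carrier G" "x \<in> carrier G" "h \<otimes> x \<otimes> inv h = x"
  have "h \<otimes> x = (h \<otimes> x \<otimes> inv h) \<otimes> h" using a(1,2) by (simp add: m_assoc)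
  thus ?thesis using a(3) by simp
qed

lemma comm_conj_eq: "h \<in> carrier G \<Longrightarrow> x \<in> carrier G \<Longrightarrow> h \<otimes> x = x \<otimes> h \<Longrightarrow> h \<otimes> x \<otimes> inv h = x"
  by (simp add: m_assoc)

lemma cm_conj: "h \<in> carrier G \<Longrightarrow> x \<in> carrier G \<Longrightarrow>
   (h \<otimes> x \<otimes> inv h \<otimes> inv x) \<otimes> x = h \<otimes> x \<otimes> inv h"
  by (simp add: m_assoc)

lemma cm_inv: "x \<in> carrier G \<Longrightarrow> y \<in> carrier G \<Longrightarrow>
   inv (x \<otimes> y \<otimes> inv x \<otimes> inv y) = y \<otimes> x \<otimes> inv y \<otimes> inv x"
  by (simp add: inv_mult_group m_assoc)

lemma cm_mult_left: "g1 \<in> carrier G \<Longrightarrow> g2 \<in> carrier G \<Longrightarrow> x \<in> carrier G \<Longrightarrow>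
   (g1 \<otimes> g2) \<otimes> x \<otimes> inv (g1 \<otimes> g2) \<otimes> inv x =
   (g1 \<otimes> (g2 \<otimes> x \<otimes> inv g2 \<otimes> inv x) \<otimes> inv g1) \<otimes> (g1 \<otimes> x \<otimes> inv g1 \<otimes> inv x)"
  by (simp add: inv_mult_group m_assoc cancel2)

lemma cm_mult_right: "g \<in> carrier G \<Longrightarrow> h1 \<in> carrier G \<Longrightarrow> h2 \<in> carrier G \<Longrightarrow>
   g \<otimes> (h1 \<otimes> h2) \<otimes> inv g \<otimes> inv (h1 \<otimes> h2) =
   (g \<otimes> h1 \<otimes> inv g \<otimes> inv h1) \<otimes> (h1 \<otimes> (g \<otimes> h2 \<otimes> inv g \<otimes> inv h2) \<otimes> inv h1)"
  by (simp add: inv_mult_group m_assoc cancel2)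

lemma cm_of_conj: "h \<in> carrier G \<Longrightarrow> x \<in> carrier G \<Longrightarrow> y \<in> carrier G \<Longrightarrow>
   h \<otimes> (x \<otimes> y \<otimes> inv x \<otimes> inv y) \<otimes> inv h =
   (h \<otimes> x \<otimes> inv h) \<otimes> (h \<otimes> y \<otimes> inv h) \<otimes> inv (h \<otimes> x \<otimes> inv h) \<otimes> inv (h \<otimes> y \<otimes> inv h)"
  by (simp add: inv_mult_group m_assoc cancel2)

lemma cm_comm_one: "x \<in> carrier G \<Longrightarrow> y \<in> carrier G \<Longrightarrow> x \<otimes> y = y \<otimes> x \<Longrightarrow> x \<otimes> y \<otimes> inv x \<otimes> inv y = \<one>"
  by (simp add: m_assoc cancel1)

lemma K0: assumes h: "h \<in> carrier G" and x: "x \<in> carrier G" and e: "e \<in> carrier G"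
  and he: "h \<otimes> e = e \<otimes> h" and eq: "h \<otimes> x \<otimes> inv h = e \<otimes> x"
  shows "h [^] (k::nat) \<otimes> x \<otimes> inv (h [^] k) = e [^] k \<otimes> x"
proof (induction k)
  case 0 then show ?case using x by simp
next
  case (Suc k)
  have "h [^] Suc k \<otimes> x \<otimes> inv (h [^] Suc k) = h \<otimes> (h [^] k \<otimes> x \<otimes> inv (h [^] k)) \<otimes> inv h"
  proof -
    have "h [^] Suc k = h \<otimes> h [^] k" using h by (rule nat_pow_Suc2)
    thus ?thesis using h x by (simp add: inv_mult_group m_assoc)
  qed
  also have "\<dots> = h \<otimes> (e [^] k \<otimes> x) \<otimes> inv h" using Suc by simp
  also have "\<dots> = (h \<otimes> e [^] k \<otimes> inv h) \<otimes> (h \<otimes> x \<otimes> inv h)" using h x e by (simp add: conj_mult)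
  also have "h \<otimes> e [^] k \<otimes> inv h = e [^] k"
    using comm_conj_eq[OF h _ group_commutes_pow[OF he[symmetric] e h, symmetric]] e by simp
  also have "e [^] k \<otimes> (h \<otimes> x \<otimes> inv h) = e [^] Suc k \<otimes> x"
    using eq e x by (simp add: m_assoc nat_pow_Suc2 del: nat_pow_Suc)
  finally show ?case .
qed

end

locale L41 = group G for G (structure) +
  fixes p m :: nat
  assumes pprime: "Factorial_Ring.prime p" and podd: "odd p" and fin: "finite (carrier G)"
    and pgrp: "\<exists>k. card (carrier G) = p ^ k"
    and cyc: "cyclic_group (subgroup_generated G (derived G (carrier G)))"
    and cardD: "card (derived G (carrier G)) = p ^ m"
begin

abbreviation "DD \<equiv> derived G (carrier G)"
abbreviation "CC \<equiv> centralizer G DD"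
abbreviation "ZZ \<equiv> center G"

lemma p1: "1 < p" using prime_gt_1_nat[OF pprime] .

lemma D_sub: "subgroup DD G" by (rule derived_is_subgroup) simp

lemma D_carr: "d \<in> DD \<Longrightarrow> d \<in> carrier G"
  using subgroup.mem_carrier[OF D_sub] .

lemma D_one: "\<one> \<in> DD" using subgroup.one_closed[OF D_sub] .
lemma D_mult: "a \<in> DD \<Longrightarrow> b \<in> DD \<Longrightarrow> a \<otimes> b \<in> DD" using subgroup.m_closed[OF D_sub] .
lemma D_inv: "a \<in> DD \<Longrightarrow> inv a \<in> DD" using subgroup.m_inv_closed[OF D_sub] .
lemma D_pow: "a \<in> DD \<Longrightarrow> a [^] (k::nat) \<in> DD" using sub_pow_closed[OF D_sub] .

lemma D_conj: "h \<in> carrier G \<Longrightarrow> d \<in> DD \<Longrightarrow> h \<otimes> d \<otimes> inv h \<in> DD"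
  using normal.inv_op_closed2[OF derived_self_is_normal] .

lemma cm_D: "x \<in> carrier G \<Longrightarrow> y \<in> carrier G \<Longrightarrow> x \<otimes> y \<otimes> inv x \<otimes> inv y \<in> DD"
  unfolding derived_def by (rule generate.incl) blast

lemma D_fin: "finite DD" using finite_subset[OF subgroup.subset[OF D_sub] fin] .

lemma gen_any:
  assumes c: "c \<in> DD" "ord c = p ^ m" and d: "d \<in> DD"
  shows "\<exists>k::nat. d = c [^] k"
proof -
  have cc: "c \<in> carrier G" using c D_carr by blast
  have sub: "generate G {c} \<subseteq> DD" using generate_subgroup_incl[OF _ D_sub] c by blast
  have "card (generate G {c}) = p ^ m" using generate_pow_card[OF cc] c by simp
  hence "generate G {c} = DD" using card_subset_eq[OF D_fin sub] cardD by simp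
  hence "DD = {c [^] k | k. k \<in> (UNIV :: nat set)}" using generate_pow_on_finite_carrier[OF fin cc] by simp
  thus ?thesis using d by blast
qed

lemma D_gen: "\<exists>c. c \<in> DD \<and> ord c = p ^ m"
proof -
  interpret SG: group "subgroup_generated G DD" by simp
  have cS: "carrier (subgroup_generated G DD) = DD"
    using D_sub subgroup.carrier_subgroup_generated_subgroup by blast
  obtain x where x: "x \<in> carrier (subgroup_generated G DD)"
    and eq: "carrier (subgroup_generated G DD) = range (\<lambda>n::int. x [^]\<^bsub>subgroup_generated G DD\<^esub> n)"
    using cyc SG.cyclic_group by blast
  have xD: "x \<in> DD" using x cS by simp
  have xc: "x \<in> carrier G" using xD D_carr by blast
  have "DD = range (\<lambda>n::int. x [^] n)"
    using eq cS int_pow_subgroup_generated[OF x] by simp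
  hence "DD \<subseteq> generate G {x}" using generate_pow[OF xc] by blast
  moreover have "generate G {x} \<subseteq> DD" using generate_subgroup_incl[OF _ D_sub] xD by blast
  ultimately have "generate G {x} = DD" by blast
  hence "ord x = p ^ m" using generate_pow_card[OF xc] cardD by simp
  thus ?thesis using xD by blast
qed

lemma D_comm: assumes "a \<in> DD" "b \<in> DD" shows "a \<otimes> b = b \<otimes> a"
proof -
  obtain c where c: "c \<in> DD" "ord c = p ^ m" using D_gen by blast
  obtain i j where "a = c [^] (i::nat)" "b = c [^] (j::nat)" using gen_any[OF c] assms by metis
  thus ?thesis using c D_carr by (simp add: nat_pow_mult add.commute)
qed

lemma D_exp: assumes "d \<in> DD" shows "d [^] (p ^ m) = \<one>"
proof -
  obtain c where c: "c \<in> DD" "ord c = p ^ m" using D_gen by blast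
  obtain i where i: "d = c [^] (i::nat)" using gen_any[OF c] assms by metis
  have cc: "c \<in> carrier G" using c D_carr by blast
  have "d [^] (p ^ m) = (c [^] (p ^ m)) [^] i" using cc by (simp add: i nat_pow_pow mult.commute)
  also have "\<dots> = \<one>" using c cc by (metis pow_ord_eq_1 nat_pow_one)
  finally show ?thesis .
qed

lemma D_ord: assumes "d \<in> DD" shows "\<exists>j\<le>m. ord d = p ^ j"
proof -
  have "ord d dvd p ^ m" using D_exp[OF assms] pow_eq_id D_carr[OF assms] by blast
  thus ?thesis using divides_primepow_nat[OF pprime] by blast
qed

lemma pow_mod_eq: assumes "x \<in> carrier G" "ord x = n"
  shows "(x [^] (i::nat) = x [^] (j::nat)) \<longleftrightarrow> i mod n = j mod n"
proof -
  have "(x [^] (int i) = x [^] (int j)) \<longleftrightarrow> int n dvd (int j - int i)"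
    using int_pow_eq[OF assms(1)] assms(2) by simp
  also have "\<dots> \<longleftrightarrow> int j mod int n = int i mod int n" by (simp add: mod_eq_dvd_iff)
  also have "\<dots> \<longleftrightarrow> i mod n = j mod n" by (metis of_nat_eq_iff zmod_int)
  finally show ?thesis by (simp add: int_pow_int)
qed

lemma C_carr: "x \<in> CC \<Longrightarrow> x \<in> carrier G" unfolding centralizer_def by blast
lemma C_comm: "x \<in> CC \<Longrightarrow> d \<in> DD \<Longrightarrow> x \<otimes> d = d \<otimes> x" unfolding centralizer_def by blast
lemma CI: "x \<in> carrier G \<Longrightarrow> (\<And>d. d \<in> DD \<Longrightarrow> x \<otimes> d = d \<otimes> x) \<Longrightarrow> x \<in> CC"
  unfolding centralizer_def by blast
lemma D_C: "d \<in> DD \<Longrightarrow> d \<in> CC" using CI D_carr D_comm by blast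
lemma C_mult: assumes "x \<in> CC" "y \<in> CC" shows "x \<otimes> y \<in> CC"
proof (rule CI)
  show "x \<otimes> y \<in> carrier G" using assms C_carr by blast
  fix d assume d: "d \<in> DD"
  have c: "x \<in> carrier G" "y \<in> carrier G" "d \<in> carrier G" using assms C_carr d D_carr by auto
  have "x \<otimes> y \<otimes> d = x \<otimes> (d \<otimes> y)" using c C_comm[OF assms(2) d] by (simp add: m_assoc)
  also have "\<dots> = d \<otimes> (x \<otimes> y)" using c C_comm[OF assms(1) d] by (simp add: m_assoc[symmetric])
  finally show "x \<otimes> y \<otimes> d = d \<otimes> (x \<otimes> y)" .
qed
lemma C_inv: assumes "x \<in> CC" shows "inv x \<in> CC"
proof (rule CI)
  show "inv x \<in> carrier G" using assms C_carr by blast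
  fix d assume d: "d \<in> DD"
  show "inv x \<otimes> d = d \<otimes> inv x" using comm_inv_left[OF C_comm[OF assms d]] assms C_carr d D_carr by blast
qed

lemma Z_carr: "z \<in> ZZ \<Longrightarrow> z \<in> carrier G" unfolding center_def by blast
lemma Z_comm: "z \<in> ZZ \<Longrightarrow> g \<in> carrier G \<Longrightarrow> z \<otimes> g = g \<otimes> z" unfolding center_def by blast
lemma ZI: "z \<in> carrier G \<Longrightarrow> (\<And>g. g \<in> carrier G \<Longrightarrow> z \<otimes> g = g \<otimes> z) \<Longrightarrow> z \<in> ZZ"
  unfolding center_def by blast

lemma Z_sub: "subgroup ZZ G"
proof (rule subgroupI)
  show "ZZ \<subseteq> carrier G" using Z_carr by blast
  show "ZZ \<noteq> {}" using ZI[of \<one>] by auto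
  fix a b assume a: "a \<in> ZZ" and b: "b \<in> ZZ"
  show "inv a \<in> ZZ"
    using ZI[of "inv a"] comm_inv_left Z_comm[OF a] Z_carr[OF a] by auto
  show "a \<otimes> b \<in> ZZ"
  proof (rule ZI)
    show "a \<otimes> b \<in> carrier G" using a b Z_carr by blast
    fix g assume g: "g \<in> carrier G"
    have c: "a \<in> carrier G" "b \<in> carrier G" using a b Z_carr by auto
    have "a \<otimes> b \<otimes> g = a \<otimes> (g \<otimes> b)" using c g Z_comm[OF b g] by (simp add: m_assoc)
    also have "\<dots> = g \<otimes> (a \<otimes> b)" using c g Z_comm[OF a g] by (simp add: m_assoc[symmetric])
    finally show "a \<otimes> b \<otimes> g = g \<otimes> (a \<otimes> b)" .
  qed
qed

lemma T_sub: "subgroup (DD \<inter> ZZ) G" using subgroups_Inter_pair[OF D_sub Z_sub] .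

lemma CommD:
  assumes d1: "d1 \<in> DD" and d2: "d2 \<in> DD" and x: "x \<in> CC" and y: "y \<in> CC"
  shows "(d1 \<otimes> x) \<otimes> (d2 \<otimes> y) \<otimes> inv (d1 \<otimes> x) \<otimes> inv (d2 \<otimes> y) = x \<otimes> y \<otimes> inv x \<otimes> inv y"
proof -
  have c: "d1 \<in> carrier G" "d2 \<in> carrier G" "x \<in> carrier G" "y \<in> carrier G"
    using d1 d2 x y D_carr C_carr by auto
  have ci: "inv d1 \<in> carrier G" "inv d2 \<in> carrier G" "inv x \<in> carrier G" "inv y \<in> carrier G"
    using c by auto
  have xi: "inv x \<in> CC" "inv y \<in> CC" using x y C_inv by auto
  have di: "inv d1 \<in> DD" "inv d2 \<in> DD" using d1 d2 D_inv by auto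
  have r1: "x \<otimes> (d2 \<otimes> z) = d2 \<otimes> (x \<otimes> z)" if "z \<in> carrier G" for z
    using lcomm[OF C_comm[OF x d2] c(3) c(2) that] .
  have r2: "u \<otimes> (inv d1 \<otimes> z) = inv d1 \<otimes> (u \<otimes> z)" if "z \<in> carrier G" "u \<in> CC" for z u
    using lcomm[OF C_comm[OF that(2) di(1)] C_carr[OF that(2)] ci(1) that(1)] .
  have r3: "u \<otimes> (inv d2 \<otimes> z) = inv d2 \<otimes> (u \<otimes> z)" if "z \<in> carrier G" "u \<in> CC" for z u
    using lcomm[OF C_comm[OF that(2) di(2)] C_carr[OF that(2)] ci(2) that(1)] .
  have r4: "inv y \<otimes> inv d2 = inv d2 \<otimes> inv y" using C_comm[OF xi(2) di(2)] .
  have r5: "d2 \<otimes> (inv d1 \<otimes> z) = inv d1 \<otimes> (d2 \<otimes> z)" if "z \<in> carrier G" for z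
    using lcomm[OF D_comm[OF d2 di(1)] c(2) ci(1) that] .
  have "(d1 \<otimes> x) \<otimes> (d2 \<otimes> y) \<otimes> inv (d1 \<otimes> x) \<otimes> inv (d2 \<otimes> y)
      = d1 \<otimes> (x \<otimes> (d2 \<otimes> (y \<otimes> (inv x \<otimes> (inv d1 \<otimes> (inv y \<otimes> inv d2))))))"
    using c by (simp add: inv_mult_group m_assoc)
  also have "\<dots> = d1 \<otimes> (d2 \<otimes> (x \<otimes> (y \<otimes> (inv x \<otimes> (inv d1 \<otimes> (inv y \<otimes> inv d2))))))"
    using c ci by (simp add: r1)
  also have "\<dots> = d1 \<otimes> (d2 \<otimes> (inv d1 \<otimes> (x \<otimes> (y \<otimes> (inv x \<otimes> (inv y \<otimes> inv d2))))))"
    using c ci x y xi by (simp add: r2)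
  also have "\<dots> = d1 \<otimes> (d2 \<otimes> (inv d1 \<otimes> (x \<otimes> (y \<otimes> (inv x \<otimes> (inv d2 \<otimes> inv y))))))"
    by (simp add: r4)
  also have "\<dots> = d1 \<otimes> (d2 \<otimes> (inv d1 \<otimes> (inv d2 \<otimes> (x \<otimes> (y \<otimes> (inv x \<otimes> inv y))))))"
    using c ci x y xi by (simp add: r3)
  also have "\<dots> = d1 \<otimes> (inv d1 \<otimes> (d2 \<otimes> (inv d2 \<otimes> (x \<otimes> (y \<otimes> (inv x \<otimes> inv y))))))"
    using c ci by (simp add: r5)
  also have "\<dots> = x \<otimes> y \<otimes> inv x \<otimes> inv y"
    using c ci by (simp add: cancel1 m_assoc)
  finally show ?thesis .
qed

lemma cm_C_Z: assumes x: "x \<in> CC" and y: "y \<in> CC"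
  shows "x \<otimes> y \<otimes> inv x \<otimes> inv y \<in> ZZ"
proof (rule ZI)
  have c: "x \<in> carrier G" "y \<in> carrier G" using x y C_carr by auto
  show "x \<otimes> y \<otimes> inv x \<otimes> inv y \<in> carrier G" using c by simp
  fix h assume h: "h \<in> carrier G"
  define d1 where "d1 = h \<otimes> x \<otimes> inv h \<otimes> inv x"
  define d2 where "d2 = h \<otimes> y \<otimes> inv h \<otimes> inv y"
  have d: "d1 \<in> DD" "d2 \<in> DD" unfolding d1_def d2_def using cm_D h c by auto
  have e1: "h \<otimes> x \<otimes> inv h = d1 \<otimes> x" unfolding d1_def using cm_conj h c by simp
  have e2: "h \<otimes> y \<otimes> inv h = d2 \<otimes> y" unfolding d2_def using cm_conj h c by simp
  have "h \<otimes> (x \<otimes> y \<otimes> inv x \<otimes> inv y) \<otimes> inv h = x \<otimes> y \<otimes> inv x \<otimes> inv y"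
    using cm_of_conj[OF h c] unfolding e1 e2 CommD[OF d x y] .
  thus "x \<otimes> y \<otimes> inv x \<otimes> inv y \<otimes> h = h \<otimes> (x \<otimes> y \<otimes> inv x \<otimes> inv y)"
    using conj_eq_comm[OF h] c by simp
qed

end

locale L41c = L41 +
  fixes c
  assumes c_D: "c \<in> DD" and c_ord: "ord c = p ^ m" and m_pos: "0 < m"
begin

lemma c_carr: "c \<in> carrier G" using D_carr[OF c_D] .

lemma pm1: "1 < p ^ m" using one_less_power[OF p1 m_pos] .

definition rho where "rho h = (SOME k. k < p ^ m \<and> h \<otimes> c \<otimes> inv h = c [^] k)"

lemma pow_red: "c [^] (k::nat) = c [^] (k mod p ^ m)"
  using pow_mod_eq[OF c_carr c_ord] by simp

lemma rho_spec: assumes h: "h \<in> carrier G"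
  shows "rho h < p ^ m \<and> h \<otimes> c \<otimes> inv h = c [^] rho h"
proof -
  obtain k where k: "h \<otimes> c \<otimes> inv h = c [^] (k::nat)" using gen_any[OF c_D c_ord D_conj[OF h c_D]] by blast
  have "k mod p ^ m < p ^ m" using pm1 by (intro mod_less_divisor) linarith
  moreover have "h \<otimes> c \<otimes> inv h = c [^] (k mod p ^ m)" using k pow_red[of k] by simp
  ultimately have "k mod p ^ m < p ^ m \<and> h \<otimes> c \<otimes> inv h = c [^] (k mod p ^ m)" by blast
  hence "\<exists>k. k < p ^ m \<and> h \<otimes> c \<otimes> inv h = c [^] k" by blast
  thus ?thesis unfolding rho_def by (rule someI_ex)
qed

lemma rho_lt: "h \<in> carrier G \<Longrightarrow> rho h < p ^ m" using rho_spec by blast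

lemma rho_conj: assumes h: "h \<in> carrier G" and d: "d \<in> DD"
  shows "h \<otimes> d \<otimes> inv h = d [^] rho h"
proof -
  obtain k where k: "d = c [^] (k::nat)" using gen_any[OF c_D c_ord d] by blast
  have "h \<otimes> d \<otimes> inv h = (h \<otimes> c \<otimes> inv h) [^] k" unfolding k using conj_pow[OF h c_carr] by simp
  also have "\<dots> = (c [^] rho h) [^] k" using rho_spec[OF h] by simp
  also have "\<dots> = d [^] rho h" unfolding k using c_carr by (simp add: nat_pow_pow mult.commute)
  finally show ?thesis .
qed

lemma rho_iter: assumes h: "h \<in> carrier G" and d: "d \<in> DD"
  shows "h [^] (i::nat) \<otimes> d \<otimes> inv (h [^] i) = d [^] (rho h ^ i)"
proof (induction i)
  case 0 then show ?case using D_carr[OF d] by simp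
next
  case (Suc i)
  have dc: "d \<in> carrier G" using D_carr[OF d] .
  have e: "h [^] Suc i = h \<otimes> h [^] i" using h by (rule nat_pow_Suc2)
  have "h [^] Suc i \<otimes> d \<otimes> inv (h [^] Suc i) = h \<otimes> (h [^] i \<otimes> d \<otimes> inv (h [^] i)) \<otimes> inv h"
    unfolding e using h dc by (simp add: inv_mult_group m_assoc)
  also have "\<dots> = h \<otimes> d [^] (rho h ^ i) \<otimes> inv h" using Suc by simp
  also have "\<dots> = (d [^] (rho h ^ i)) [^] rho h" using rho_conj[OF h D_pow[OF d]] .
  also have "\<dots> = d [^] (rho h ^ Suc i)" using dc by (simp add: nat_pow_pow mult.commute)
  finally show ?case .
qed

lemma D_pow_1mod: assumes d: "d \<in> DD" and e: "e mod p ^ m = 1" shows "d [^] e = d"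
proof -
  obtain k where k: "d = c [^] (k::nat)" using gen_any[OF c_D c_ord d] by blast
  have "d [^] e = c [^] (k * e)" unfolding k using c_carr by (simp add: nat_pow_pow)
  also have "\<dots> = c [^] k"
  proof -
    have "(k * e) mod p ^ m = (k * (e mod p ^ m)) mod p ^ m" by (simp add: mod_mult_right_eq)
    hence "(k * e) mod p ^ m = k mod p ^ m" using e by simp
    thus ?thesis using pow_mod_eq[OF c_carr c_ord] by blast
  qed
  finally show ?thesis using k by simp
qed

lemma pow_C_iff: assumes h: "h \<in> carrier G"
  shows "h [^] (i::nat) \<in> CC \<longleftrightarrow> (rho h ^ i) mod p ^ m = 1"
proof
  assume a: "h [^] i \<in> CC"
  have "h [^] i \<otimes> c \<otimes> inv (h [^] i) = c" using comm_conj_eq[OF _ c_carr C_comm[OF a c_D]] h by simp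
  hence "c [^] (rho h ^ i) = c [^] (1::nat)" using rho_iter[OF h c_D] c_carr by simp
  hence "(rho h ^ i) mod p ^ m = 1 mod p ^ m" using pow_mod_eq[OF c_carr c_ord] by blast
  moreover have "(1::nat) mod p ^ m = 1" using pm1 by (rule mod_less)
  ultimately show "(rho h ^ i) mod p ^ m = 1" by simp
next
  assume a: "(rho h ^ i) mod p ^ m = 1"
  show "h [^] i \<in> CC"
  proof (rule CI)
    show "h [^] i \<in> carrier G" using h by simp
    fix d assume d: "d \<in> DD"
    have "h [^] i \<otimes> d \<otimes> inv (h [^] i) = d" using rho_iter[OF h d] D_pow_1mod[OF d a] by simp
    thus "h [^] i \<otimes> d = d \<otimes> h [^] i" using conj_eq_comm[OF _ D_carr[OF d]] h by simp
  qed
qed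

lemma C_iff_rho: assumes h: "h \<in> carrier G" shows "h \<in> CC \<longleftrightarrow> rho h = 1"
  using pow_C_iff[OF h, of 1] rho_lt[OF h] h by simp

lemma rho_mod_p: assumes h: "h \<in> carrier G" shows "rho h mod p = 1"
proof -
  obtain K where K: "card (carrier G) = p ^ K" using pgrp by blast
  have "h [^] (p ^ K) = \<one>" using pow_order_eq_1[OF h] K unfolding order_def by simp
  hence "h [^] (p ^ K) \<in> CC" using D_C D_one by simp
  hence "(rho h ^ (p ^ K)) mod p ^ m = 1" using pow_C_iff[OF h] by blast
  hence "(rho h ^ (p ^ K)) mod p ^ m mod p = 1 mod p" by simp
  hence "(rho h ^ (p ^ K)) mod p = 1" using m_pos p1 by (simp add: mod_mod_cancel)
  moreover have "(rho h ^ (p ^ K)) mod p = rho h mod p" using fermat_pow[OF pprime] unfolding cong_def .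
  ultimately show ?thesis by simp
qed

lemma rho_pos: assumes h: "h \<in> carrier G" shows "1 \<le> rho h"
proof (rule ccontr)
  assume "\<not> 1 \<le> rho h" hence "rho h = 0" by simp
  thus False using rho_mod_p[OF h] by simp
qed

lemma K1: assumes h: "h \<in> carrier G" and x: "x \<in> carrier G" and e: "e \<in> DD"
  and eq: "h \<otimes> x \<otimes> inv h = e \<otimes> x"
  shows "h [^] (i::nat) \<otimes> x \<otimes> inv (h [^] i) = e [^] gs (rho h) i \<otimes> x"
proof (induction i)
  case 0 then show ?case using x by simp
next
  case (Suc i)
  have ec: "e \<in> carrier G" using D_carr[OF e] .
  have eh: "h [^] Suc i = h \<otimes> h [^] i" using h by (rule nat_pow_Suc2)
  have "h [^] Suc i \<otimes> x \<otimes> inv (h [^] Suc i) = h \<otimes> (h [^] i \<otimes> x \<otimes> inv (h [^] i)) \<otimes> inv h"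
    unfolding eh using h x by (simp add: inv_mult_group m_assoc)
  also have "\<dots> = h \<otimes> (e [^] gs (rho h) i \<otimes> x) \<otimes> inv h" using Suc by simp
  also have "\<dots> = (h \<otimes> e [^] gs (rho h) i \<otimes> inv h) \<otimes> (h \<otimes> x \<otimes> inv h)"
    using h x ec by (simp add: conj_mult)
  also have "h \<otimes> e [^] gs (rho h) i \<otimes> inv h = (e [^] gs (rho h) i) [^] rho h"
    using rho_conj[OF h D_pow[OF e]] .
  also have "(e [^] gs (rho h) i) [^] rho h \<otimes> (h \<otimes> x \<otimes> inv h) = e [^] gs (rho h) (Suc i) \<otimes> x"
    unfolding eq using ec x by (simp add: nat_pow_pow m_assoc[symmetric] mult.commute)
  finally show ?case .
qed

end

lemma ppow_decomp:
  fixes p d :: nat assumes p: "1 < p" and d: "0 < d"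
  shows "\<exists>k w. d = p ^ k * w \<and> \<not> p dvd w"
  using d
proof (induction d rule: less_induct)
  case (less d)
  show ?case
  proof (cases "p dvd d")
    case False then show ?thesis by (intro exI[of _ 0] exI[of _ d]) simp
  next
    case True
    then obtain d' where d': "d = p * d'" by blast
    have "0 < d'" using less.prems d' by simp
    moreover have "d' < d" using d' p \<open>0 < d'\<close> by simp
    ultimately obtain k w where "d' = p ^ k * w" "\<not> p dvd w" using less.IH by blast
    then show ?thesis using d' by (intro exI[of _ "Suc k"] exI[of _ w]) simp
  qed
qed

lemma gs_mod:
  fixes p q :: nat assumes q: "q mod p = 1"
  shows "gs q n mod p = n mod p"
proof (induction n)
  case 0 then show ?case by simp
next
  case (Suc n)
  have "gs q (Suc n) mod p = (1 + (q mod p) * (gs q n mod p)) mod p"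
    by (simp only: gs.simps plus_1_eq_Suc) (metis mod_Suc_eq mod_mult_eq)
  also have "\<dots> = (1 + n mod p) mod p" using q Suc by simp
  also have "\<dots> = Suc n mod p" by (simp add: mod_Suc_eq)
  finally show ?case .
qed

lemma mod_1_of_dvd:
  fixes r n :: nat assumes "1 \<le> r" "n dvd r - 1" "1 < n" shows "r mod n = 1"
proof -
  have "r mod n = 1 mod n" using mod_eq_dvd_iff_nat[of 1 r n] assms by simp
  thus ?thesis using assms(3) by simp
qed

lemma NTa:
  fixes p r s u m d :: nat
  assumes p: "Factorial_Ring.prime p" "odd p" and r: "r - 1 = p ^ s * u" "1 \<le> r" and u: "\<not> p dvd u"
    and s: "1 \<le> s" and d: "0 < d" and dv: "p ^ m dvd r ^ d - 1"
  shows "p ^ (m - s) dvd d"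
proof -
  have p1: "1 < p" using prime_gt_1_nat[OF p(1)] .
  obtain k w where kw: "d = p ^ k * w" "\<not> p dvd w" using ppow_decomp[OF p1 d] by blast
  have "p ^ s = p * p ^ (s - 1)" using s by (simp add: power_eq_if)
  hence "p dvd r - 1" unfolding r(1) by simp
  hence rp: "r mod p = 1" using mod_1_of_dvd[OF r(2) _ p1] by blast
  define R where "R = r ^ (p ^ k)"
  obtain w1 where w1: "gs r (p ^ k) = p ^ k * w1" "\<not> p dvd w1" using gs_ppow[OF p rp] by blast
  have R1: "R - 1 = p ^ (s + k) * (u * w1)"
    using gs_geom[OF r(2), of "p ^ k"] unfolding R_def r(1) w1(1) by (simp add: power_add algebra_simps)
  have Rge: "1 \<le> R" unfolding R_def using r(2) by simp
  have "R mod p = ((r mod p) ^ (p ^ k)) mod p" unfolding R_def by (simp add: power_mod)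
  hence Rp: "R mod p = 1" using rp p1 by simp
  have gsR: "\<not> p dvd gs R w" using gs_mod[OF Rp, of w] kw(2) by (simp add: dvd_eq_mod_eq_0)
  have "r ^ d - 1 = R ^ w - 1" unfolding R_def kw(1) by (simp add: power_mult)
  also have "\<dots> = (R - 1) * gs R w" using gs_geom[OF Rge] by simp
  also have "\<dots> = p ^ (s + k) * (u * w1 * gs R w)" unfolding R1 by (simp add: algebra_simps)
  finally have eq: "r ^ d - 1 = p ^ (s + k) * (u * w1 * gs R w)" .
  have "\<not> p dvd u * w1 * gs R w" using u w1(2) gsR p(1) by (simp add: prime_dvd_mult_iff)
  hence cp: "coprime p (u * w1 * gs R w)" using prime_imp_coprime[OF p(1)] by blast
  have cop: "coprime (p ^ m) (u * w1 * gs R w)" unfolding coprime_power_left_iff using cp by blast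
  have "p ^ m dvd p ^ (s + k)" using dv unfolding eq using cop
    by (simp add: coprime_dvd_mult_left_iff)
  hence "m \<le> s + k" using power_dvd_imp_le p1 by blast
  hence "p ^ (m - s) dvd p ^ k" by (simp add: le_imp_power_dvd)
  thus ?thesis unfolding kw(1) by simp
qed

lemma NTc:
  fixes p r s u m q :: nat
  assumes p: "Factorial_Ring.prime p" "odd p" and r: "r - 1 = p ^ s * u" "1 \<le> r" and u: "\<not> p dvd u"
    and s: "1 \<le> s" "s \<le> m" and q: "q < p ^ m" "q mod p ^ s = 1"
  shows "\<exists>i. r ^ i mod p ^ m = q"
proof -
  have p1: "1 < p" using prime_gt_1_nat[OF p(1)] .
  define n where "n = p ^ (m - s)"
  have pm: "p ^ m = p ^ s * n" unfolding n_def using s by (simp add: power_add[symmetric])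
  have ps1: "1 < p ^ s" using one_less_power[OF p1] s by simp
  have npos: "0 < n" unfolding n_def using p1 by simp
  have rs: "r mod p ^ s = 1" using mod_1_of_dvd[OF r(2) _ ps1] r(1) by simp
  have "p ^ s = p * p ^ (s - 1)" using s by (simp add: power_eq_if)
  hence rp: "r mod p = 1" using mod_1_of_dvd[OF r(2) _ p1] r(1) by simp
  define RR where "RR = (\<lambda>i. r ^ i mod p ^ m) ` {..<n}"
  define U where "U = {x. x < p ^ m \<and> x mod p ^ s = 1}"
  have sub: "RR \<subseteq> U"
  proof
    fix x assume "x \<in> RR"
    then obtain i where x: "x = r ^ i mod p ^ m" unfolding RR_def by blast
    have "x < p ^ m" unfolding x using p1 by simp
    moreover have "x mod p ^ s = r ^ i mod p ^ s" unfolding x pm by (simp add: mod_mod_cancel)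
    moreover have "r ^ i mod p ^ s = ((r mod p ^ s) ^ i) mod p ^ s" by (simp add: power_mod)
    ultimately show "x \<in> U" unfolding U_def using rs ps1 s(1) p1 by simp
  qed
  have inj: "inj_on (\<lambda>i. r ^ i mod p ^ m) {..<n}"
  proof (rule inj_onI, rule ccontr)
    fix i j assume i: "i \<in> {..<n}" and j: "j \<in> {..<n}" and eq: "r ^ i mod p ^ m = r ^ j mod p ^ m" and ne: "i \<noteq> j"
    have main: "False" if ij: "a < b" "b < n" and e: "r ^ a mod p ^ m = r ^ b mod p ^ m" for a b
    proof -
      have le: "r ^ a \<le> r ^ b" using r(2) ij(1) by (simp add: power_increasing)
      have "p ^ m dvd r ^ b - r ^ a" using mod_eq_dvd_iff_nat[OF le, of "p ^ m"] e[symmetric] by simp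
      moreover have "r ^ b - r ^ a = r ^ a * (r ^ (b - a) - 1)"
        using ij(1) by (simp add: diff_mult_distrib2 power_add[symmetric])
      moreover have "coprime (p ^ m) (r ^ a)"
      proof -
        have "\<not> p dvd r" using rp p1 by (simp add: dvd_eq_mod_eq_0)
        hence "coprime p r" using prime_imp_coprime[OF p(1)] by blast
        thus ?thesis by simp
      qed
      ultimately have "p ^ m dvd r ^ (b - a) - 1" by (simp add: coprime_dvd_mult_right_iff)
      hence "p ^ (m - s) dvd b - a" using NTa[OF p r u s(1)] ij(1) by simp
      hence "n \<le> b - a" unfolding n_def using ij(1) by (simp add: dvd_imp_le)
      thus False using ij by simp
    qed
    show False
    proof (cases "i < j")
      case True then show ?thesis using main[OF True] j eq by simp
    next
      case False then have "j < i" using ne by simp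
      then show ?thesis using main[of j i] i eq by simp
    qed
  qed
  have cardR: "card RR = n" unfolding RR_def using card_image[OF inj] by simp
  have U_eq: "U = (\<lambda>k. 1 + p ^ s * k) ` {..<n}"
  proof
    show "U \<subseteq> (\<lambda>k. 1 + p ^ s * k) ` {..<n}"
    proof
      fix x assume "x \<in> U"
      hence x: "x < p ^ m" "x mod p ^ s = 1" unfolding U_def by auto
      have e: "x = 1 + p ^ s * (x div p ^ s)" using div_mult_mod_eq[of x "p ^ s"] x(2) by (simp add: mult.commute)
      have "p ^ s * (x div p ^ s) < p ^ s * n" using x(1) e pm by linarith
      hence "x div p ^ s < n" by simp
      thus "x \<in> (\<lambda>k. 1 + p ^ s * k) ` {..<n}" using e by blast
    qed
    show "(\<lambda>k. 1 + p ^ s * k) ` {..<n} \<subseteq> U"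
    proof
      fix x assume "x \<in> (\<lambda>k. 1 + p ^ s * k) ` {..<n}"
      then obtain k where k: "k < n" "x = 1 + p ^ s * k" by blast
      have "1 + p ^ s * k < p ^ s + p ^ s * k" using ps1 by simp
      also have "\<dots> = p ^ s * (k + 1)" by (simp add: algebra_simps)
      also have "\<dots> \<le> p ^ s * n" using k(1) by (intro mult_le_mono2) simp
      finally have "x < p ^ m" using k(2) pm by simp
      moreover have "x mod p ^ s = 1" unfolding k(2) mod_mult_self2 using ps1 s(1) p1 by simp
      ultimately show "x \<in> U" unfolding U_def by blast
    qed
  qed
  have "inj_on (\<lambda>k. 1 + p ^ s * k) {..<n}" using p1 by (intro inj_onI) simp
  hence cardU: "card U = n" unfolding U_eq using card_image by fastforce
  have "RR = U" using card_subset_eq[OF _ sub] cardR cardU unfolding U_eq by simp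
  moreover have "q \<in> U" unfolding U_def using q by simp
  ultimately show ?thesis unfolding RR_def by blast
qed

context L41c begin

lemma D_pow_modeq: assumes d: "d \<in> DD" and e: "e1 mod p ^ m = e2 mod p ^ m" shows "d [^] e1 = d [^] e2"
proof -
  obtain k where k: "d = c [^] (k::nat)" using gen_any[OF c_D c_ord d] by blast
  have "(k * e1) mod p ^ m = (k * (e1 mod p ^ m)) mod p ^ m" by (simp add: mod_mult_right_eq)
  also have "\<dots> = (k * e2) mod p ^ m" unfolding e by (simp add: mod_mult_right_eq)
  finally have "c [^] (k * e1) = c [^] (k * e2)" using pow_mod_eq[OF c_carr c_ord] by blast
  thus ?thesis unfolding k using c_carr by (simp add: nat_pow_pow)
qed

end

locale L41a = L41c +
  fixes a s u
  assumes a_carr: "a \<in> carrier G" and a_rho: "rho a - 1 = p ^ s * u" and u_nd: "\<not> p dvd u"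
    and s_pos: "1 \<le> s" and s_lt: "s < m" and all_div: "\<And>h. h \<in> carrier G \<Longrightarrow> p ^ s dvd rho h - 1"
begin

abbreviation "nn \<equiv> p ^ (m - s)"

lemma pm_split: "p ^ m = p ^ s * nn" using s_lt by (simp add: power_add[symmetric])

lemma ps1: "1 < p ^ s" using one_less_power[OF p1] s_pos by simp

lemma T_char: assumes g0: "g0 \<in> DD" "ord g0 = p ^ m"
  shows "d \<in> DD \<inter> ZZ \<longleftrightarrow> (\<exists>j. d = g0 [^] (nn * j))"
proof
  have g0c: "g0 \<in> carrier G" using D_carr[OF g0(1)] .
  assume dT: "d \<in> DD \<inter> ZZ"
  hence dD: "d \<in> DD" and dZ: "d \<in> ZZ" by auto
  have dc: "d \<in> carrier G" using D_carr[OF dD] .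
  obtain k where k: "d = g0 [^] (k::nat)" using gen_any[OF g0 dD] by blast
  have "a \<otimes> d = d \<otimes> a" using Z_comm[OF dZ a_carr] by simp
  hence "a \<otimes> d \<otimes> inv a = d" using comm_conj_eq[OF a_carr dc] by simp
  hence "d [^] rho a = d" using rho_conj[OF a_carr dD] by simp
  hence "g0 [^] (k * rho a) = g0 [^] k" unfolding k using g0c by (simp add: nat_pow_pow)
  hence e: "(k * rho a) mod p ^ m = k mod p ^ m" using pow_mod_eq[OF g0c g0(2)] by blast
  have le: "k \<le> k * rho a" using rho_pos[OF a_carr] by simp
  have "p ^ m dvd k * rho a - k" using mod_eq_dvd_iff_nat[OF le, of "p ^ m"] e by simp
  moreover have "k * rho a - k = p ^ s * (k * u)"
  proof -
    have "k * rho a - k = k * (rho a - 1)" by (simp add: diff_mult_distrib2)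
    also have "\<dots> = k * (p ^ s * u)" by (simp only: a_rho)
    finally show ?thesis by (simp add: algebra_simps)
  qed
  ultimately have "p ^ s * nn dvd p ^ s * (k * u)" using pm_split by simp
  hence "nn dvd k * u" using p1 by simp
  moreover have "coprime nn u"
  proof -
    have "coprime p u" using prime_imp_coprime[OF pprime u_nd] .
    thus ?thesis by simp
  qed
  ultimately have "nn dvd k" by (simp add: coprime_dvd_mult_left_iff)
  then obtain j where "k = nn * j" by blast
  thus "\<exists>j. d = g0 [^] (nn * j)" using k by blast
next
  have g0c: "g0 \<in> carrier G" using D_carr[OF g0(1)] .
  assume "\<exists>j. d = g0 [^] (nn * j)"
  then obtain j where j: "d = g0 [^] (nn * j)" by blast
  have dD: "d \<in> DD" unfolding j using D_pow[OF g0(1)] .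
  have dc: "d \<in> carrier G" using D_carr[OF dD] .
  have "d \<in> ZZ"
  proof (rule ZI[OF dc])
    fix g assume g: "g \<in> carrier G"
    obtain v where v: "rho g - 1 = p ^ s * v" using all_div[OF g] by blast
    have rg: "rho g = 1 + p ^ s * v" using v rho_pos[OF g] by simp
    have "nn * j * rho g = nn * j + p ^ m * (j * v)" unfolding rg pm_split by (simp add: algebra_simps)
    hence "(nn * j * rho g) mod p ^ m = (nn * j) mod p ^ m" by simp
    hence "g0 [^] (nn * j * rho g) = g0 [^] (nn * j)" using pow_mod_eq[OF g0c g0(2)] by blast
    hence "g \<otimes> d \<otimes> inv g = d" using rho_conj[OF g dD] unfolding j using g0c by (simp add: nat_pow_pow)
    thus "d \<otimes> g = g \<otimes> d" using conj_eq_comm[OF g dc] by simp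
  qed
  thus "d \<in> DD \<inter> ZZ" using dD by blast
qed

lemma T_card: "card (DD \<inter> ZZ) = p ^ s"
proof -
  have img: "DD \<inter> ZZ = (\<lambda>j. c [^] (nn * j)) ` {..<p ^ s}"
  proof
    show "DD \<inter> ZZ \<subseteq> (\<lambda>j. c [^] (nn * j)) ` {..<p ^ s}"
    proof
      fix d assume "d \<in> DD \<inter> ZZ"
      then obtain j where j: "d = c [^] (nn * j)" using T_char[OF c_D c_ord] by blast
      have "(nn * j) mod p ^ m = (nn * (j mod p ^ s)) mod p ^ m"
        unfolding pm_split by (simp add: mult.commute[of "p ^ s"] mod_mult_mult1)
      hence "d = c [^] (nn * (j mod p ^ s))" unfolding j using pow_mod_eq[OF c_carr c_ord] by blast
      moreover have "j mod p ^ s < p ^ s" using ps1 by (intro mod_less_divisor) linarith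
      ultimately show "d \<in> (\<lambda>j. c [^] (nn * j)) ` {..<p ^ s}" by blast
    qed
    show "(\<lambda>j. c [^] (nn * j)) ` {..<p ^ s} \<subseteq> DD \<inter> ZZ"
      using T_char[OF c_D c_ord] by blast
  qed
  have "inj_on (\<lambda>j. c [^] (nn * j)) {..<p ^ s}"
  proof (rule inj_onI)
    fix i j assume i: "i \<in> {..<p ^ s}" and j: "j \<in> {..<p ^ s}" and e: "c [^] (nn * i) = c [^] (nn * j)"
    have "(nn * i) mod p ^ m = (nn * j) mod p ^ m" using e pow_mod_eq[OF c_carr c_ord] by blast
    hence "nn * (i mod p ^ s) = nn * (j mod p ^ s)"
      unfolding pm_split by (simp add: mult.commute[of "p ^ s"] mod_mult_mult1)
    thus "i = j" using i j p1 by simp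
  qed
  thus ?thesis unfolding img by (simp add: card_image)
qed

lemma T_exp: assumes d: "d \<in> DD \<inter> ZZ" shows "d [^] (p ^ s) = \<one>"
proof -
  obtain j where j: "d = c [^] (nn * j)" using T_char[OF c_D c_ord] d by blast
  have "d [^] (p ^ s) = (c [^] (p ^ m)) [^] j" unfolding j pm_split using c_carr
    by (simp add: nat_pow_pow algebra_simps)
  also have "\<dots> = \<one>"
  proof -
    have "c [^] (p ^ m) = \<one>" using pow_ord_eq_1[OF c_carr] c_ord by simp
    thus ?thesis by simp
  qed
  finally show ?thesis .
qed

lemma cm_T: "x \<in> CC \<Longrightarrow> y \<in> CC \<Longrightarrow> x \<otimes> y \<otimes> inv x \<otimes> inv y \<in> DD \<inter> ZZ"
  using cm_D[OF C_carr C_carr] cm_C_Z by blast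

end

context L41a begin

lemma decomp: assumes g: "g \<in> carrier G" shows "\<exists>i y. y \<in> CC \<and> g = a [^] (i::nat) \<otimes> y"
proof -
  have qm: "rho g mod p ^ s = 1" using mod_1_of_dvd[OF rho_pos[OF g] all_div[OF g] ps1] .
  obtain i where i: "rho a ^ i mod p ^ m = rho g"
    using NTc[OF pprime podd a_rho rho_pos[OF a_carr] u_nd s_pos less_imp_le[OF s_lt] rho_lt[OF g] qm] by blast
  define A where "A = a [^] i"
  have Ac: "A \<in> carrier G" unfolding A_def using a_carr by simp
  define y where "y = inv A \<otimes> g"
  have yc: "y \<in> carrier G" unfolding y_def using Ac g by simp
  have "y \<in> CC"
  proof (rule CI[OF yc])
    fix d assume d: "d \<in> DD"
    have dc: "d \<in> carrier G" using D_carr[OF d] .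
    have "rho g mod p ^ m = rho a ^ i mod p ^ m" using i rho_lt[OF g] by simp
    hence "d [^] rho g = d [^] (rho a ^ i)" by (rule D_pow_modeq[OF d])
    hence "g \<otimes> d \<otimes> inv g = A \<otimes> d \<otimes> inv A"
      unfolding A_def rho_conj[OF g d] rho_iter[OF a_carr d] .
    moreover have "g \<otimes> d = (g \<otimes> d \<otimes> inv g) \<otimes> g" using g dc by (simp add: m_assoc)
    ultimately have e: "g \<otimes> d = (A \<otimes> d \<otimes> inv A) \<otimes> g" by simp
    have "y \<otimes> d = inv A \<otimes> (g \<otimes> d)" unfolding y_def using Ac g dc by (simp add: m_assoc)
    also have "\<dots> = inv A \<otimes> ((A \<otimes> d \<otimes> inv A) \<otimes> g)" unfolding e ..
    also have "\<dots> = d \<otimes> y" unfolding y_def using Ac g dc by (simp add: m_assoc cancel2)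
    finally show "y \<otimes> d = d \<otimes> y" .
  qed
  moreover have "g = A \<otimes> y" unfolding y_def using Ac g by (simp add: cancel1)
  ultimately show ?thesis unfolding A_def by blast
qed

lemma a_pow_C: "a [^] nn \<in> CC"
proof -
  have rp: "rho a mod p = 1" using rho_mod_p[OF a_carr] .
  obtain w where w: "gs (rho a) nn = nn * w" using gs_ppow[OF pprime podd rp] by blast
  have "rho a ^ nn - 1 = (rho a - 1) * gs (rho a) nn" using gs_geom[OF rho_pos[OF a_carr]] by simp
  also have "\<dots> = p ^ m * (u * w)" unfolding a_rho w pm_split by (simp add: algebra_simps)
  finally have "p ^ m dvd rho a ^ nn - 1" by simp
  hence "rho a ^ nn mod p ^ m = 1"
    using mod_1_of_dvd[of "rho a ^ nn" "p ^ m"] rho_pos[OF a_carr] pm1 by simp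
  thus ?thesis using pow_C_iff[OF a_carr] by blast
qed

lemma cm_apow: assumes x: "x \<in> carrier G"
  shows "a [^] (i::nat) \<otimes> x \<otimes> inv (a [^] i) \<otimes> inv x
       = (a \<otimes> x \<otimes> inv a \<otimes> inv x) [^] gs (rho a) i"
proof -
  define e where "e = a \<otimes> x \<otimes> inv a \<otimes> inv x"
  have eD: "e \<in> DD" unfolding e_def using cm_D[OF a_carr x] .
  have "a \<otimes> x \<otimes> inv a = e \<otimes> x" unfolding e_def using cm_conj[OF a_carr x] by simp
  hence "a [^] i \<otimes> x \<otimes> inv (a [^] i) = e [^] gs (rho a) i \<otimes> x" using K1[OF a_carr x eD] by blast
  thus ?thesis unfolding e_def[symmetric] using x D_carr[OF D_pow[OF eD]] by (simp add: m_assoc)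
qed

end

context L41a begin

lemma gen_exists: "\<exists>x0 \<in> CC. ord (a \<otimes> x0 \<otimes> inv a \<otimes> inv x0) = p ^ m"
proof (rule ccontr)
  assume H0: "\<not> (\<exists>x0 \<in> CC. ord (a \<otimes> x0 \<otimes> inv a \<otimes> inv x0) = p ^ m)"
  define M where "M = {d \<in> DD. d [^] (p ^ (m - 1)) = \<one>}"
  have M_D: "d \<in> M \<Longrightarrow> d \<in> DD" for d unfolding M_def by blast
  have M_sub: "subgroup M G"
  proof (rule subgroupI)
    show "M \<subseteq> carrier G" using M_D D_carr by blast
    show "M \<noteq> {}" unfolding M_def using D_one by auto
    fix x y assume x: "x \<in> M" and y: "y \<in> M"
    have xc: "x \<in> carrier G" and yc: "y \<in> carrier G" using x y M_D D_carr by auto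
    show "inv x \<in> M" using x xc D_inv unfolding M_def by (simp add: nat_pow_inv)
    have "(x \<otimes> y) [^] (p ^ (m - 1)) = x [^] (p ^ (m - 1)) \<otimes> y [^] (p ^ (m - 1))"
      using pow_mult_distrib[OF D_comm[OF M_D[OF x] M_D[OF y]] xc yc] .
    thus "x \<otimes> y \<in> M" using x y D_mult unfolding M_def by simp
  qed
  have M_conj: "h \<otimes> d \<otimes> inv h \<in> M" if h: "h \<in> carrier G" and d: "d \<in> M" for h d
  proof -
    have dc: "d \<in> carrier G" using d M_D D_carr by blast
    have "(h \<otimes> d \<otimes> inv h) [^] (p ^ (m - 1)) = h \<otimes> d [^] (p ^ (m - 1)) \<otimes> inv h"
      using conj_pow[OF h dc] .
    also have "\<dots> = \<one>" using d h unfolding M_def by simp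
    finally show ?thesis using D_conj[OF h M_D[OF d]] unfolding M_def by blast
  qed
  have M_mult: "x \<in> M \<Longrightarrow> y \<in> M \<Longrightarrow> x \<otimes> y \<in> M" for x y using subgroup.m_closed[OF M_sub] .
  have M_inv: "x \<in> M \<Longrightarrow> inv x \<in> M" for x using subgroup.m_inv_closed[OF M_sub] .
  have H: "a \<otimes> x \<otimes> inv a \<otimes> inv x \<in> M" if x: "x \<in> CC" for x
  proof -
    define e where "e = a \<otimes> x \<otimes> inv a \<otimes> inv x"
    have eD: "e \<in> DD" unfolding e_def using cm_D[OF a_carr C_carr[OF x]] .
    obtain j where j: "j \<le> m" "ord e = p ^ j" using D_ord[OF eD] by blast
    have "j \<noteq> m" using H0 x j unfolding e_def by blast
    hence "p ^ j dvd p ^ (m - 1)" using j by (simp add: le_imp_power_dvd)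
    hence "e [^] (p ^ (m - 1)) = \<one>" using pow_eq_id[OF D_carr[OF eD]] j by simp
    thus ?thesis using eD unfolding M_def e_def by blast
  qed
  have i1: "x \<otimes> y \<otimes> inv x \<otimes> inv y \<in> M" if x: "x \<in> CC" and y: "y \<in> CC" for x y
  proof -
    define d where "d = x \<otimes> y \<otimes> inv x \<otimes> inv y"
    have dT: "d \<in> DD \<inter> ZZ" unfolding d_def using cm_T[OF x y] .
    have dc: "d \<in> carrier G" using dT D_carr by blast
    have "p ^ (m - 1) = p ^ s * p ^ (m - 1 - s)" using s_lt by (simp add: power_add[symmetric])
    hence "d [^] (p ^ (m - 1)) = (d [^] (p ^ s)) [^] (p ^ (m - 1 - s))" using dc by (simp add: nat_pow_pow)
    also have "\<dots> = \<one>" using T_exp[OF dT] by simp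
    finally show ?thesis using dT unfolding M_def d_def by blast
  qed
  have i2: "a [^] (i::nat) \<otimes> x \<otimes> inv (a [^] i) \<otimes> inv x \<in> M" if x: "x \<in> CC" for x i
    unfolding cm_apow[OF C_carr[OF x]] using sub_pow_closed[OF M_sub H[OF x]] .
  have i3: "g \<otimes> x \<otimes> inv g \<otimes> inv x \<in> M" if g: "g \<in> carrier G" and x: "x \<in> CC" for g x
  proof -
    obtain i y where y: "y \<in> CC" and gy: "g = a [^] (i::nat) \<otimes> y" using decomp[OF g] by blast
    have Ac: "a [^] i \<in> carrier G" using a_carr by simp
    show ?thesis unfolding gy cm_mult_left[OF Ac C_carr[OF y] C_carr[OF x]]
      using M_mult[OF M_conj[OF Ac i1[OF y x]] i2[OF x]] .
  qed
  have i4: "g \<otimes> h \<otimes> inv g \<otimes> inv h \<in> M" if g: "g \<in> carrier G" and h: "h \<in> carrier G" for g h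
  proof -
    obtain j y where y: "y \<in> CC" and hy: "h = a [^] (j::nat) \<otimes> y" using decomp[OF h] by blast
    obtain i z where z: "z \<in> CC" and gz: "g = a [^] (i::nat) \<otimes> z" using decomp[OF g] by blast
    define B where "B = a [^] j"
    define A where "A = a [^] i"
    have Bc: "B \<in> carrier G" and Ac: "A \<in> carrier G" unfolding A_def B_def using a_carr by auto
    have yc: "y \<in> carrier G" and zc: "z \<in> carrier G" using y z C_carr by auto
    have BA: "B \<otimes> A = A \<otimes> B" unfolding A_def B_def using a_carr by (simp add: nat_pow_mult add.commute)
    have "B \<otimes> (A \<otimes> z) \<otimes> inv B \<otimes> inv (A \<otimes> z)
        = (B \<otimes> A \<otimes> inv B \<otimes> inv A) \<otimes> (A \<otimes> (B \<otimes> z \<otimes> inv B \<otimes> inv z) \<otimes> inv A)"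
      using cm_mult_right[OF Bc Ac zc] .
    also have "B \<otimes> A \<otimes> inv B \<otimes> inv A = \<one>" using cm_comm_one[OF Bc Ac BA] .
    finally have "B \<otimes> g \<otimes> inv B \<otimes> inv g = A \<otimes> (B \<otimes> z \<otimes> inv B \<otimes> inv z) \<otimes> inv A"
      unfolding gz A_def[symmetric] using Ac Bc zc by simp
    hence c1: "B \<otimes> g \<otimes> inv B \<otimes> inv g \<in> M" using M_conj[OF Ac i2[OF z]] unfolding B_def by simp
    have c2: "g \<otimes> B \<otimes> inv g \<otimes> inv B \<in> M" using M_inv[OF c1] cm_inv[OF Bc g] by simp
    have "g \<otimes> h \<otimes> inv g \<otimes> inv h = (g \<otimes> B \<otimes> inv g \<otimes> inv B) \<otimes> (B \<otimes> (g \<otimes> y \<otimes> inv g \<otimes> inv y) \<otimes> inv B)"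
      unfolding hy B_def[symmetric] using cm_mult_right[OF g Bc yc] .
    thus ?thesis using M_mult[OF c2 M_conj[OF Bc i3[OF g y]]] by simp
  qed
  have "derived_set G (carrier G) \<subseteq> M"
  proof
    fix w assume "w \<in> derived_set G (carrier G)"
    then obtain g h where "g \<in> carrier G" "h \<in> carrier G" "w = g \<otimes> h \<otimes> inv g \<otimes> inv h" by blast
    thus "w \<in> M" using i4 by blast
  qed
  hence "DD \<subseteq> M" unfolding derived_def using generate_subgroup_incl[OF _ M_sub] by blast
  hence "c [^] (p ^ (m - 1)) = \<one>" using c_D unfolding M_def by blast
  hence "p ^ m dvd p ^ (m - 1)" using pow_eq_id[OF c_carr] c_ord by simp
  hence "m \<le> m - 1" using power_dvd_imp_le[OF _ p1] by blast
  thus False using m_pos by simp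
qed

end

context L41a begin

lemma mho_T: "mho G p (m - s) DD = DD \<inter> ZZ"
proof
  show "mho G p (m - s) DD \<subseteq> DD \<inter> ZZ"
    unfolding mho_def
  proof (rule generate_subgroup_incl[OF _ T_sub])
    show "{x [^] nn |x. x \<in> DD} \<subseteq> DD \<inter> ZZ"
    proof
      fix w assume "w \<in> {x [^] nn |x. x \<in> DD}"
      then obtain x where x: "x \<in> DD" "w = x [^] nn" by blast
      obtain k where k: "x = c [^] (k::nat)" using gen_any[OF c_D c_ord x(1)] by blast
      have "w = c [^] (nn * k)" unfolding x(2) k using c_carr by (simp add: nat_pow_pow mult.commute)
      thus "w \<in> DD \<inter> ZZ" using T_char[OF c_D c_ord] by blast
    qed
  qed
  show "DD \<inter> ZZ \<subseteq> mho G p (m - s) DD"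
  proof
    fix d assume "d \<in> DD \<inter> ZZ"
    then obtain j where j: "d = c [^] (nn * j)" using T_char[OF c_D c_ord] by blast
    have "d = (c [^] j) [^] nn" unfolding j using c_carr by (simp add: nat_pow_pow mult.commute)
    moreover have "c [^] j \<in> DD" using D_pow[OF c_D] .
    ultimately have "d \<in> {x [^] nn |x. x \<in> DD}" by blast
    thus "d \<in> mho G p (m - s) DD" unfolding mho_def by (rule generate.incl)
  qed
qed

lemma C_sub_carr: "CC \<subseteq> carrier G" using C_carr by blast

lemma derC_T: "derived G CC = DD \<inter> ZZ"
proof
  show "derived G CC \<subseteq> DD \<inter> ZZ"
    unfolding derived_def[of G CC]
  proof (rule generate_subgroup_incl[OF _ T_sub])
    show "derived_set G CC \<subseteq> DD \<inter> ZZ"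
    proof
      fix w assume "w \<in> derived_set G CC"
      then obtain x y where "x \<in> CC" "y \<in> CC" "w = x \<otimes> y \<otimes> inv x \<otimes> inv y" by blast
      thus "w \<in> DD \<inter> ZZ" using cm_T by blast
    qed
  qed
  show "DD \<inter> ZZ \<subseteq> derived G CC"
  proof
    fix d assume dT: "d \<in> DD \<inter> ZZ"
    obtain x0 where x0: "x0 \<in> CC" and ordc: "ord (a \<otimes> x0 \<otimes> inv a \<otimes> inv x0) = p ^ m"
      using gen_exists by blast
    define c' where "c' = a \<otimes> x0 \<otimes> inv a \<otimes> inv x0"
    have x0c: "x0 \<in> carrier G" using C_carr[OF x0] .
    have c'D: "c' \<in> DD" unfolding c'_def using cm_D[OF a_carr x0c] .
    have c'c: "c' \<in> carrier G" using D_carr[OF c'D] .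
    have c'o: "ord c' = p ^ m" unfolding c'_def using ordc .
    obtain j where j: "d = c' [^] (nn * j)" using T_char[OF c'D c'o] dT by blast
    obtain w where w: "gs (rho a) nn = nn * w" "\<not> p dvd w"
      using gs_ppow[OF pprime podd rho_mod_p[OF a_carr]] by blast
    have subD: "subgroup (derived G CC) G" using derived_is_subgroup[OF C_sub_carr] .
    have "a [^] nn \<otimes> x0 \<otimes> inv (a [^] nn) \<otimes> inv x0 \<in> derived G CC"
      unfolding derived_def[of G CC] using a_pow_C x0 by (intro generate.incl) blast
    hence el: "c' [^] (nn * w) \<in> derived G CC" unfolding cm_apow[OF x0c] c'_def[symmetric] w(1) .
    have "coprime w (p ^ s)"
    proof -
      have "coprime p w" using prime_imp_coprime[OF pprime w(2)] .
      thus ?thesis by (simp add: coprime_commute)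
    qed
    then obtain w' where w': "[w * w' = Suc 0] (mod p ^ s)" using cong_solve_coprime_nat by blast
    have "(w * w') mod p ^ s = 1" using w' ps1 s_pos p1 unfolding cong_def by simp
    hence ww: "w * w' = 1 + p ^ s * ((w * w') div p ^ s)" using div_mult_mod_eq[of "w * w'" "p ^ s"]
      by (simp add: mult.commute)
    have "nn * w * (w' * j) = nn * j + p ^ m * (((w * w') div p ^ s) * j)"
    proof -
      have "nn * w * (w' * j) = nn * j * (w * w')" by (simp add: algebra_simps)
      also have "\<dots> = nn * j * (1 + p ^ s * ((w * w') div p ^ s))" using ww by simp
      also have "\<dots> = nn * j + p ^ m * (((w * w') div p ^ s) * j)" unfolding pm_split by (simp add: algebra_simps)
      finally show ?thesis .
    qed
    hence "(nn * w * (w' * j)) mod p ^ m = (nn * j) mod p ^ m" by simp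
    hence "c' [^] (nn * w * (w' * j)) = d" unfolding j using pow_mod_eq[OF c'c c'o] by blast
    moreover have "(c' [^] (nn * w)) [^] (w' * j) = c' [^] (nn * w * (w' * j))" using c'c by (simp add: nat_pow_pow)
    ultimately have "d = (c' [^] (nn * w)) [^] (w' * j)" by simp
    thus "d \<in> derived G CC" using sub_pow_closed[OF subD el] by simp
  qed
qed

end

context L41a begin

lemma part1_sub: assumes g: "g \<in> CC" shows "g [^] (p ^ s) \<in> ZZ <#> DD"
proof -
  define N where "N = p ^ s"
  have gc: "g \<in> carrier G" using C_carr[OF g] .
  define e where "e = a \<otimes> g \<otimes> inv a \<otimes> inv g"
  have eD: "e \<in> DD" unfolding e_def using cm_D[OF a_carr gc] .
  have ec: "e \<in> carrier G" using D_carr[OF eD] .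
  have age: "a \<otimes> g \<otimes> inv a = e \<otimes> g" unfolding e_def using cm_conj[OF a_carr gc] by simp
  have ge: "g \<otimes> e = e \<otimes> g" using C_comm[OF g eD] .
  have h1: "g \<otimes> e [^] N = e [^] N \<otimes> g" using group_commutes_pow[OF ge[symmetric] ec gc, of N] by simp
  have "g [^] N \<otimes> e [^] N = e [^] N \<otimes> g [^] N" using group_commutes_pow[OF h1 gc] ec by simp
  hence eNgN: "e [^] N \<otimes> g [^] N = g [^] N \<otimes> e [^] N" by simp
  have conjgN: "a \<otimes> g [^] N \<otimes> inv a = e [^] N \<otimes> g [^] N"
    using conj_pow[OF a_carr gc, of N] unfolding age pow_mult_distrib[OF ge[symmetric] ec gc] by simp
  obtain j where j: "e = c [^] (j::nat)" using gen_any[OF c_D c_ord eD] by blast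
  have "coprime u (p ^ m)"
  proof -
    have "coprime p u" using prime_imp_coprime[OF pprime u_nd] .
    thus ?thesis by (simp add: coprime_commute)
  qed
  then obtain u' where u': "[u * u' = Suc 0] (mod p ^ m)" using cong_solve_coprime_nat by blast
  have uu: "u * u' = 1 + p ^ m * ((u * u') div p ^ m)"
  proof -
    have "(u * u') mod p ^ m = 1" using u' pm1 m_pos p1 unfolding cong_def by simp
    thus ?thesis using div_mult_mod_eq[of "u * u'" "p ^ m"] by (simp add: mult.commute)
  qed
  define k where "k = j * u'"
  define d where "d = c [^] k"
  have dD: "d \<in> DD" unfolding d_def using D_pow[OF c_D] .
  have dc: "d \<in> carrier G" using D_carr[OF dD] .
  have key: "d [^] rho a = d \<otimes> e [^] N"
  proof -
    have r: "rho a = 1 + p ^ s * u" using a_rho rho_pos[OF a_carr] by simp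
    have "k * rho a = k + j * N + p ^ m * (j * N * ((u * u') div p ^ m))"
    proof -
      have "k * rho a = k + j * N * (u * u')" unfolding r k_def N_def by (simp add: algebra_simps)
      also have "\<dots> = k + j * N + p ^ m * (j * N * ((u * u') div p ^ m))"
        by (subst uu) (simp add: algebra_simps)
      finally show ?thesis .
    qed
    hence "(k * rho a) mod p ^ m = (k + j * N) mod p ^ m" by simp
    hence "c [^] (k * rho a) = c [^] (k + j * N)" using pow_mod_eq[OF c_carr c_ord] by blast
    thus ?thesis unfolding d_def j using c_carr by (simp add: nat_pow_pow nat_pow_mult)
  qed
  define z where "z = g [^] N \<otimes> inv d"
  have zc: "z \<in> carrier G" unfolding z_def using gc dc by simp
  have za: "z \<otimes> a = a \<otimes> z"
  proof -
    have eNc: "e [^] N \<in> carrier G" using ec by simp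
    have "a \<otimes> z \<otimes> inv a = (a \<otimes> g [^] N \<otimes> inv a) \<otimes> inv (a \<otimes> d \<otimes> inv a)"
      unfolding z_def using a_carr gc dc by (simp add: conj_mult conj_inv)
    also have "\<dots> = (e [^] N \<otimes> g [^] N) \<otimes> inv (d \<otimes> e [^] N)"
      unfolding conjgN rho_conj[OF a_carr dD] key ..
    also have "\<dots> = (g [^] N \<otimes> e [^] N) \<otimes> (inv (e [^] N) \<otimes> inv d)"
      unfolding eNgN using dc eNc by (simp add: inv_mult_group)
    also have "\<dots> = z" unfolding z_def using dc eNc gc by (simp add: m_assoc cancel1)
    finally have "a \<otimes> z \<otimes> inv a = z" .
    thus ?thesis using conj_eq_comm[OF a_carr zc] by simp
  qed
  have zy: "z \<otimes> y = y \<otimes> z" if y: "y \<in> CC" for y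
  proof -
    have yc: "y \<in> carrier G" using C_carr[OF y] .
    define f where "f = g \<otimes> y \<otimes> inv g \<otimes> inv y"
    have fT: "f \<in> DD \<inter> ZZ" unfolding f_def using cm_T[OF g y] .
    have fc: "f \<in> carrier G" using fT D_carr by blast
    have gf: "g \<otimes> f = f \<otimes> g" using Z_comm[of f g] fT gc by simp
    have "g \<otimes> y \<otimes> inv g = f \<otimes> y" unfolding f_def using cm_conj[OF gc yc] by simp
    hence "g [^] N \<otimes> y \<otimes> inv (g [^] N) = f [^] N \<otimes> y" using K0[OF gc yc fc gf] by blast
    also have "f [^] N = \<one>" unfolding N_def using T_exp[OF fT] .
    finally have "g [^] N \<otimes> y \<otimes> inv (g [^] N) = y" using yc by simp
    hence gNy: "g [^] N \<otimes> y = y \<otimes> g [^] N" using conj_eq_comm[of "g [^] N" y] gc yc by simp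
    have dy: "inv d \<otimes> y = y \<otimes> inv d" using C_comm[OF y D_inv[OF dD]] by simp
    have "z \<otimes> y = g [^] N \<otimes> (inv d \<otimes> y)" unfolding z_def using gc dc yc by (simp add: m_assoc)
    also have "\<dots> = (g [^] N \<otimes> y) \<otimes> inv d" unfolding dy using gc dc yc by (simp add: m_assoc)
    also have "\<dots> = y \<otimes> z" unfolding gNy z_def using gc dc yc by (simp add: m_assoc)
    finally show ?thesis .
  qed
  have "z \<in> ZZ"
  proof (rule ZI[OF zc])
    fix h assume h: "h \<in> carrier G"
    obtain i y where y: "y \<in> CC" and hy: "h = a [^] (i::nat) \<otimes> y" using decomp[OF h] by blast
    have yc: "y \<in> carrier G" using C_carr[OF y] .
    have zA: "z \<otimes> a [^] i = a [^] i \<otimes> z" using group_commutes_pow[OF za[symmetric] a_carr zc] by simp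
    have "z \<otimes> h = (z \<otimes> a [^] i) \<otimes> y" unfolding hy using zc a_carr yc by (simp add: m_assoc)
    also have "\<dots> = a [^] i \<otimes> (z \<otimes> y)" unfolding zA using zc a_carr yc by (simp add: m_assoc)
    also have "\<dots> = h \<otimes> z" unfolding zy[OF y] hy using zc a_carr yc by (simp add: m_assoc)
    finally show "z \<otimes> h = h \<otimes> z" .
  qed
  moreover have "g [^] N = z \<otimes> d" unfolding z_def using gc dc by (simp add: m_assoc)
  ultimately show ?thesis unfolding set_mult_def N_def using dD by blast
qed

lemma part1_sup: assumes g: "g \<in> carrier G" and gN: "g [^] (p ^ s) \<in> ZZ <#> DD" shows "g \<in> CC"
proof -
  define N where "N = p ^ s"
  obtain z d where z: "z \<in> ZZ" and d: "d \<in> DD" and gzd: "g [^] N = z \<otimes> d"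
    using gN unfolding set_mult_def N_def by blast
  obtain x0 where x0: "x0 \<in> CC" and ordc: "ord (a \<otimes> x0 \<otimes> inv a \<otimes> inv x0) = p ^ m"
    using gen_exists by blast
  define c' where "c' = a \<otimes> x0 \<otimes> inv a \<otimes> inv x0"
  have x0c: "x0 \<in> carrier G" using C_carr[OF x0] .
  have c'D: "c' \<in> DD" unfolding c'_def using cm_D[OF a_carr x0c] .
  have c'c: "c' \<in> carrier G" using D_carr[OF c'D] .
  have c'o: "ord c' = p ^ m" unfolding c'_def using ordc .
  have zc: "z \<in> carrier G" using Z_carr[OF z] .
  have dc: "d \<in> carrier G" using D_carr[OF d] .
  have gNx: "g [^] N \<otimes> x0 = x0 \<otimes> g [^] N"
  proof -
    have "z \<otimes> d \<otimes> x0 = z \<otimes> (x0 \<otimes> d)" using C_comm[OF x0 d] zc dc x0c by (simp add: m_assoc)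
    also have "\<dots> = x0 \<otimes> (z \<otimes> d)" using Z_comm[OF z x0c] zc dc x0c by (simp add: m_assoc[symmetric])
    finally show ?thesis unfolding gzd .
  qed
  obtain i y where y: "y \<in> CC" and gy: "g = a [^] (i::nat) \<otimes> y" using decomp[OF g] by blast
  define A where "A = a [^] i"
  have Ac: "A \<in> carrier G" unfolding A_def using a_carr by simp
  have yc: "y \<in> carrier G" using C_carr[OF y] .
  define f where "f = y \<otimes> x0 \<otimes> inv y \<otimes> inv x0"
  have fT: "f \<in> DD \<inter> ZZ" unfolding f_def using cm_T[OF y x0] .
  have fc: "f \<in> carrier G" using fT D_carr by blast
  define e where "e = g \<otimes> x0 \<otimes> inv g \<otimes> inv x0"
  have eD: "e \<in> DD" unfolding e_def using cm_D[OF g x0c] .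
  have ec: "e \<in> carrier G" using D_carr[OF eD] .
  define GG where "GG = gs (rho a) i"
  have cmA: "A \<otimes> x0 \<otimes> inv A \<otimes> inv x0 = c' [^] GG"
    unfolding A_def GG_def c'_def using cm_apow[OF x0c] .
  have Af: "A \<otimes> f \<otimes> inv A = f"
    using comm_conj_eq[OF Ac fc] Z_comm[of f A] fT Ac by simp
  have e_eq: "e = f \<otimes> c' [^] GG"
    unfolding e_def gy A_def[symmetric] cm_mult_left[OF Ac yc x0c] f_def[symmetric] Af cmA ..
  have "g \<otimes> x0 \<otimes> inv g = e \<otimes> x0" unfolding e_def using cm_conj[OF g x0c] by simp
  hence "g [^] N \<otimes> x0 \<otimes> inv (g [^] N) = e [^] gs (rho g) N \<otimes> x0" using K1[OF g x0c eD] by blast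
  moreover have "g [^] N \<otimes> x0 \<otimes> inv (g [^] N) = x0" using comm_conj_eq[of "g [^] N" x0] gNx g x0c by simp
  ultimately have "e [^] gs (rho g) N \<otimes> x0 = x0" by simp
  hence e1: "e [^] gs (rho g) N = \<one>" using ec x0c by simp
  obtain w where w: "gs (rho g) N = N * w" "\<not> p dvd w"
    using gs_ppow[OF pprime podd rho_mod_p[OF g]] unfolding N_def by blast
  obtain jj where jj: "jj \<le> m" "ord e = p ^ jj" using D_ord[OF eD] by blast
  have "p ^ jj dvd N * w" using e1 pow_eq_id[OF ec] jj w(1) by simp
  moreover have "coprime (p ^ jj) w"
  proof -
    have "coprime p w" using prime_imp_coprime[OF pprime w(2)] .
    thus ?thesis by simp
  qed
  ultimately have "p ^ jj dvd N" by (simp add: coprime_dvd_mult_left_iff)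
  hence eN: "e [^] N = \<one>" using pow_eq_id[OF ec] jj by simp
  have fN: "f [^] N = \<one>" unfolding N_def using T_exp[OF fT] .
  have cG: "c' [^] GG = inv f \<otimes> e" unfolding e_eq using fc c'c by (simp add: cancel2)
  have "(c' [^] GG) [^] N = (inv f) [^] N \<otimes> e [^] N"
    unfolding cG using pow_mult_distrib[OF D_comm[OF D_inv[OF D_mult[OF fT[THEN IntD1] D_one]] eD]] fc ec
    by (simp add: pow_mult_distrib[OF D_comm[OF D_inv[OF fT[THEN IntD1]] eD]])
  also have "\<dots> = \<one>" using fN eN fc by (simp add: nat_pow_inv)
  finally have "c' [^] (GG * N) = \<one>" using c'c by (simp add: nat_pow_pow)
  hence "p ^ m dvd GG * N" using pow_eq_id[OF c'c] c'o by simp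
  hence "p ^ s * nn dvd p ^ s * GG" unfolding pm_split N_def by (simp add: mult.commute)
  hence nG: "nn dvd GG" using p1 by simp
  have "rho a ^ i - 1 = (rho a - 1) * GG" unfolding GG_def using gs_geom[OF rho_pos[OF a_carr]] by simp
  also have "\<dots> = p ^ s * u * GG" unfolding a_rho ..
  finally have "p ^ m dvd rho a ^ i - 1" unfolding pm_split using nG by (simp add: mult_dvd_mono)
  hence "rho a ^ i mod p ^ m = 1"
    using mod_1_of_dvd[of "rho a ^ i" "p ^ m"] rho_pos[OF a_carr] pm1 by simp
  hence "A \<in> CC" unfolding A_def using pow_C_iff[OF a_carr] by blast
  thus ?thesis unfolding gy A_def[symmetric] using C_mult y by blast
qed

end

context L41 begin

lemma gen_triv: "S \<subseteq> {\<one>} \<Longrightarrow> generate G S = {\<one>}"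
  using generate_subgroup_incl[OF _ triv_subgroup] generate.one by blast

lemma lcs2_D: "lcs G N (Suc (Suc 0)) \<subseteq> DD" if "N \<subseteq> carrier G"
proof -
  have "lcs G N (Suc (Suc 0)) = comm_subgroup G N N" by simp
  also have "\<dots> \<subseteq> DD" unfolding comm_subgroup_def
  proof (rule generate_subgroup_incl[OF _ D_sub])
    show "{a \<otimes> b \<otimes> inv a \<otimes> inv b |a b. a \<in> N \<and> b \<in> N} \<subseteq> DD"
      using cm_D that by blast
  qed
  finally show ?thesis .
qed

lemma lcs_high: assumes N: "N \<subseteq> CC" shows "lcs G N (Suc (Suc (Suc k))) = {\<one>}"
proof (induction k)
  case 0
  have Nc: "N \<subseteq> carrier G" using N C_carr by blast
  have "lcs G N (Suc (Suc (Suc 0))) = comm_subgroup G (lcs G N (Suc (Suc 0))) N" by simp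
  also have "\<dots> = {\<one>}" unfolding comm_subgroup_def
  proof (rule gen_triv)
    show "{x \<otimes> b \<otimes> inv x \<otimes> inv b |x b. x \<in> lcs G N (Suc (Suc 0)) \<and> b \<in> N} \<subseteq> {\<one>}"
    proof
      fix w assume "w \<in> {x \<otimes> b \<otimes> inv x \<otimes> inv b |x b. x \<in> lcs G N (Suc (Suc 0)) \<and> b \<in> N}"
      then obtain x b where xb: "x \<in> lcs G N (Suc (Suc 0))" "b \<in> N" "w = x \<otimes> b \<otimes> inv x \<otimes> inv b" by blast
      have xD: "x \<in> DD" using lcs2_D[OF Nc] xb(1) by blast
      have bC: "b \<in> CC" using N xb(2) by blast
      have "x \<otimes> b = b \<otimes> x" using C_comm[OF bC xD] by simp
      thus "w \<in> {\<one>}" using cm_comm_one[OF D_carr[OF xD] C_carr[OF bC]] xb(3) by simp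
    qed
  qed
  finally show ?case .
next
  case (Suc k)
  have "lcs G N (Suc (Suc (Suc (Suc k)))) = comm_subgroup G (lcs G N (Suc (Suc (Suc k)))) N" by simp
  also have "\<dots> = {\<one>}" unfolding comm_subgroup_def Suc
  proof (rule gen_triv)
    show "{x \<otimes> b \<otimes> inv x \<otimes> inv b |x b. x \<in> {\<one>} \<and> b \<in> N} \<subseteq> {\<one>}"
    proof
      fix w assume "w \<in> {x \<otimes> b \<otimes> inv x \<otimes> inv b |x b. x \<in> {\<one>} \<and> b \<in> N}"
      then obtain b where b: "b \<in> N" "w = \<one> \<otimes> b \<otimes> inv \<one> \<otimes> inv b" by blast
      have "b \<in> carrier G" using C_carr N b(1) by blast
      thus "w \<in> {\<one>}" using b(2) by simp
    qed
  qed
  finally show ?case .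
qed

lemma p3: "3 \<le> p"
proof (rule ccontr)
  assume "\<not> 3 \<le> p" hence "p = 2" using p1 by simp
  thus False using podd by simp
qed

lemma jennings_iff: assumes N: "subgroup N G" "N \<subseteq> CC"
  shows "jennings G p N (p ^ n) = {\<one>} \<longleftrightarrow> (\<forall>x\<in>N. x [^] (p ^ n) = \<one>)"
proof
  assume J: "jennings G p N (p ^ n) = {\<one>}"
  show "\<forall>x\<in>N. x [^] (p ^ n) = \<one>"
  proof
    fix x assume x: "x \<in> N"
    have "x [^] (p ^ n) \<in> mho G p n (lcs G N 1)" unfolding mho_def using x
      by (intro generate.incl) auto
    moreover have "mho G p n (lcs G N 1) \<in> {mho G p j (lcs G N i) | i j. 1 \<le> i \<and> p ^ n \<le> i * p ^ j}"
      by (rule CollectI, rule exI[of _ 1], rule exI[of _ n]) simp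
    ultimately have "x [^] (p ^ n) \<in> jennings G p N (p ^ n)" unfolding jennings_def
      by (intro generate.incl) blast
    thus "x [^] (p ^ n) = \<one>" using J by simp
  qed
next
  assume Q: "\<forall>x\<in>N. x [^] (p ^ n) = \<one>"
  have Nc: "N \<subseteq> carrier G" using subgroup.subset[OF N(1)] .
  have L: "y [^] (p ^ j) = \<one>" if i: "1 \<le> i" and ij: "p ^ n \<le> i * p ^ j" and y: "y \<in> lcs G N i" for i j y
  proof -
    have "i = 1 \<or> i = 2 \<or> 3 \<le> i" using i by linarith
    then consider "i = 1" | "i = 2" | k where "i = Suc (Suc (Suc k))"
    proof (elim disjE)
      assume "3 \<le> i" "\<And>k. i = Suc (Suc (Suc k)) \<Longrightarrow> thesis"
      moreover have "i = Suc (Suc (Suc (i - 3)))" using \<open>3 \<le> i\<close> by simp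
      ultimately show thesis by blast
    qed auto
    then show ?thesis
    proof cases
      case 1
      have yN: "y \<in> N" using y 1 by simp
      have "n \<le> j" using ij 1 p1 by simp
      hence "p ^ j = p ^ n * p ^ (j - n)" by (simp add: power_add[symmetric])
      thus ?thesis using Q yN Nc by (auto simp: nat_pow_pow[symmetric])
    next
      case 2
      have "n \<le> j"
      proof (rule ccontr)
        assume "\<not> n \<le> j"
        hence "Suc j \<le> n" by simp
        hence "p ^ Suc j \<le> p ^ n" using p1 by (intro power_increasing) auto
        moreover have "2 * p ^ j < p ^ Suc j"
        proof -
          have "0 < p ^ j" using p1 by simp
          hence "2 * p ^ j < 3 * p ^ j" by simp
          also have "\<dots> \<le> p * p ^ j" by (rule mult_le_mono1[OF p3])
          finally show ?thesis by simp
        qed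
        moreover have "p ^ n \<le> 2 * p ^ j" using ij 2 by simp
        ultimately show False by linarith
      qed
      hence pj: "p ^ j = p ^ n * p ^ (j - n)" by (simp add: power_add[symmetric])
      define Mn where "Mn = {d \<in> DD. d [^] (p ^ n) = \<one>}"
      have Mn_sub: "subgroup Mn G"
      proof (rule subgroupI)
        show "Mn \<subseteq> carrier G" unfolding Mn_def using D_carr by blast
        show "Mn \<noteq> {}" unfolding Mn_def using D_one by auto
        fix x y assume x: "x \<in> Mn" and y: "y \<in> Mn"
        have xD: "x \<in> DD" and yD: "y \<in> DD" using x y unfolding Mn_def by auto
        have xc: "x \<in> carrier G" and yc: "y \<in> carrier G" using xD yD D_carr by auto
        show "inv x \<in> Mn" using x xc D_inv unfolding Mn_def by (simp add: nat_pow_inv)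
        have "(x \<otimes> y) [^] (p ^ n) = x [^] (p ^ n) \<otimes> y [^] (p ^ n)"
          using pow_mult_distrib[OF D_comm[OF xD yD] xc yc] .
        thus "x \<otimes> y \<in> Mn" using x y D_mult unfolding Mn_def by simp
      qed
      have "lcs G N 2 \<subseteq> Mn"
      proof -
        have "lcs G N 2 = comm_subgroup G N N" by (simp add: numeral_2_eq_2)
        also have "\<dots> \<subseteq> Mn" unfolding comm_subgroup_def
        proof (rule generate_subgroup_incl[OF _ Mn_sub])
          show "{a \<otimes> b \<otimes> inv a \<otimes> inv b |a b. a \<in> N \<and> b \<in> N} \<subseteq> Mn"
          proof
            fix w assume "w \<in> {a \<otimes> b \<otimes> inv a \<otimes> inv b |a b. a \<in> N \<and> b \<in> N}"
            then obtain x z where xz: "x \<in> N" "z \<in> N" "w = x \<otimes> z \<otimes> inv x \<otimes> inv z" by blast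
            have xc: "x \<in> carrier G" and zc: "z \<in> carrier G" using xz Nc by auto
            have wD: "w \<in> DD" using cm_D[OF xc zc] xz(3) by simp
            have wc: "w \<in> carrier G" using D_carr[OF wD] .
            have xw: "x \<otimes> w = w \<otimes> x" using C_comm[OF _ wD] N(2) xz(1) by blast
            have "x \<otimes> z \<otimes> inv x = w \<otimes> z" using cm_conj[OF xc zc] xz(3) by simp
            hence "x [^] (p ^ n) \<otimes> z \<otimes> inv (x [^] (p ^ n)) = w [^] (p ^ n) \<otimes> z"
              using K0[OF xc zc wc xw] by blast
            hence "w [^] (p ^ n) \<otimes> z = z" using Q xz(1) zc by simp
            hence "w [^] (p ^ n) = \<one>" using wc zc by simp
            thus "w \<in> Mn" unfolding Mn_def using wD by blast
          qed
        qed
        finally show ?thesis .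
      qed
      hence "y \<in> Mn" using y 2 by blast
      hence "y [^] (p ^ n) = \<one>" and "y \<in> carrier G" unfolding Mn_def using D_carr by auto
      thus ?thesis unfolding pj by (simp add: nat_pow_pow[symmetric])
    next
      case 3
      have "y = \<one>" using y lcs_high[OF N(2)] 3 by simp
      thus ?thesis by simp
    qed
  qed
  show "jennings G p N (p ^ n) = {\<one>}" unfolding jennings_def
  proof (rule gen_triv)
    show "\<Union> {mho G p j (lcs G N i) |i j. 1 \<le> i \<and> p ^ n \<le> i * p ^ j} \<subseteq> {\<one>}"
    proof
      fix w assume "w \<in> \<Union> {mho G p j (lcs G N i) |i j. 1 \<le> i \<and> p ^ n \<le> i * p ^ j}"
      then obtain i j where ij: "1 \<le> i" "p ^ n \<le> i * p ^ j" and w: "w \<in> mho G p j (lcs G N i)" by blast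
      have "mho G p j (lcs G N i) = {\<one>}" unfolding mho_def
        by (rule gen_triv) (use L[OF ij] in blast)
      thus "w \<in> {\<one>}" using w by simp
    qed
  qed
qed

lemma part3: assumes N: "subgroup N G" "N \<subseteq> CC"
  shows "group_exponent G N = p ^ (LEAST n. jennings G p N (p ^ n) = {\<one>})"
proof -
  have Nc: "N \<subseteq> carrier G" using subgroup.subset[OF N(1)] .
  define Q where "Q n \<longleftrightarrow> (\<forall>x\<in>N. x [^] (p ^ n) = \<one>)" for n
  obtain K where K: "card (carrier G) = p ^ K" using pgrp by blast
  have QK: "Q K" unfolding Q_def using pow_order_eq_1 K Nc unfolding order_def by auto
  define E where "E = (LEAST n. Q n)"
  have QE: "Q E" unfolding E_def using QK by (rule LeastI)
  have eqL: "(LEAST n. jennings G p N (p ^ n) = {\<one>}) = E"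
    unfolding E_def Q_def using jennings_iff[OF N] by simp
  have "group_exponent G N = p ^ E" unfolding group_exponent_def
  proof (rule Least_equality)
    show "0 < p ^ E \<and> (\<forall>x\<in>N. x [^] (p ^ E) = \<one>)" using QE p1 unfolding Q_def by simp
  next
    fix e :: nat assume e: "0 < e \<and> (\<forall>x\<in>N. x [^] e = \<one>)"
    define g where "g = gcd e (p ^ K)"
    have "g dvd p ^ K" unfolding g_def by simp
    then obtain k where k: "k \<le> K" "g = p ^ k" using divides_primepow_nat[OF pprime] by blast
    have "Q k" unfolding Q_def
    proof
      fix x assume x: "x \<in> N"
      have xc: "x \<in> carrier G" using x Nc by blast
      have "ord x dvd e" using e x pow_eq_id[OF xc] by blast
      moreover have "ord x dvd p ^ K" using QK x pow_eq_id[OF xc] unfolding Q_def by blast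
      ultimately have "ord x dvd g" unfolding g_def by simp
      thus "x [^] (p ^ k) = \<one>" using pow_eq_id[OF xc] k by simp
    qed
    hence "E \<le> k" unfolding E_def by (rule Least_le)
    hence "p ^ E \<le> p ^ k" using p1 by simp
    also have "p ^ k \<le> e"
    proof -
      have "g dvd e" unfolding g_def by simp
      thus ?thesis using k(2) e by (simp add: dvd_imp_le)
    qed
    finally show "p ^ E \<le> e" .
  qed
  thus ?thesis using eqL by simp
qed

end

context L41 begin

lemma triv_case: assumes allC: "\<And>h. h \<in> carrier G \<Longrightarrow> h \<in> CC" and tT: "card (DD \<inter> ZZ) = p ^ t"
  shows "CC = {g \<in> carrier G. g [^] (p ^ t) \<in> ZZ <#> DD} \<and> derived G CC = mho G p (m - t) DD"
proof -
  have DZ: "DD \<subseteq> ZZ"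
  proof
    fix d assume d: "d \<in> DD"
    show "d \<in> ZZ"
    proof (rule ZI[OF D_carr[OF d]])
      fix g assume g: "g \<in> carrier G"
      show "d \<otimes> g = g \<otimes> d" using C_comm[OF allC[OF g] d] by simp
    qed
  qed
  have "DD \<inter> ZZ = DD" using DZ by blast
  hence "p ^ t = p ^ m" using tT cardD by simp
  hence tm: "t = m" using p1 by simp
  have CCe: "CC = carrier G" using allC C_carr by blast
  have "\<forall>g \<in> carrier G. g [^] (p ^ t) \<in> ZZ <#> DD"
  proof
    fix g assume g: "g \<in> carrier G"
    have "g [^] (p ^ m) \<in> ZZ"
    proof (rule ZI)
      show "g [^] (p ^ m) \<in> carrier G" using g by simp
      fix h assume h: "h \<in> carrier G"
      define w where "w = g \<otimes> h \<otimes> inv g \<otimes> inv h"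
      have wD: "w \<in> DD" unfolding w_def using cm_D[OF g h] .
      have wc: "w \<in> carrier G" using D_carr[OF wD] .
      have gw: "g \<otimes> w = w \<otimes> g" using Z_comm[OF DZ[THEN subsetD, OF wD] g] by simp
      have "g \<otimes> h \<otimes> inv g = w \<otimes> h" unfolding w_def using cm_conj[OF g h] by simp
      hence "g [^] (p ^ m) \<otimes> h \<otimes> inv (g [^] (p ^ m)) = w [^] (p ^ m) \<otimes> h" using K0[OF g h wc gw] by blast
      hence "g [^] (p ^ m) \<otimes> h \<otimes> inv (g [^] (p ^ m)) = h" using D_exp[OF wD] h by simp
      thus "g [^] (p ^ m) \<otimes> h = h \<otimes> g [^] (p ^ m)" using conj_eq_comm[of "g [^] (p ^ m)" h] g h by simp
    qed
    moreover have "g [^] (p ^ m) = g [^] (p ^ m) \<otimes> \<one>" using g by simp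
    ultimately show "g [^] (p ^ t) \<in> ZZ <#> DD" unfolding set_mult_def tm using D_one by blast
  qed
  hence p1': "CC = {g \<in> carrier G. g [^] (p ^ t) \<in> ZZ <#> DD}" using CCe by blast
  have "mho G p (m - t) DD = generate G DD"
  proof -
    have "{x [^] (p ^ (m - t)) |x. x \<in> DD} = DD" using tm D_carr by force
    thus ?thesis unfolding mho_def by simp
  qed
  also have "\<dots> = DD"
    using generate_subgroup_incl[OF _ D_sub] generate.incl[of _ DD G] by blast
  finally have "derived G CC = mho G p (m - t) DD" using CCe by simp
  thus ?thesis using p1' by blast
qed

end

theorem lemma4p1:
  fixes G :: "('a, 'b) monoid_scheme" and p m t :: nat
  assumes "group G"
    and "Factorial_Ring.prime p" and "odd p"
    and "finite (carrier G)" and "\<exists>k. card (carrier G) = p ^ k"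
    and "cyclic_group (subgroup_generated G (derived G (carrier G)))"
    and "card (derived G (carrier G)) = p ^ m"
    and "card (derived G (carrier G) \<inter> center G) = p ^ t"
  shows "centralizer G (derived G (carrier G)) =
           {g \<in> carrier G. g [^]\<^bsub>G\<^esub> (p ^ t) \<in> center G <#>\<^bsub>G\<^esub> derived G (carrier G)}
         \<and> derived G (centralizer G (derived G (carrier G))) = mho G p (m - t) (derived G (carrier G))
         \<and> (\<forall>N. subgroup N G \<longrightarrow> N \<subseteq> centralizer G (derived G (carrier G)) \<longrightarrow>
           group_exponent G N = p ^ (LEAST n. jennings G p N (p ^ n) = {\<one>\<^bsub>G\<^esub>}))"
proof -
  have L: "L41 G p m" unfolding L41_def L41_axioms_def using assms by blast
  interpret L41 G p m by (rule L)
  have P3: "\<forall>N. subgroup N G \<longrightarrow> N \<subseteq> CC \<longrightarrow> group_exponent G N = p ^ (LEAST n. jennings G p N (p ^ n) = {\<one>\<^bsub>G\<^esub>})"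
    using part3 by blast
  show ?thesis
  proof (cases "\<forall>h \<in> carrier G. h \<in> CC")
    case True
    then show ?thesis using triv_case[OF _ assms(8)] P3 by blast
  next
    case False
    then obtain h0 where h0: "h0 \<in> carrier G" "h0 \<notin> CC" by blast
    have m_pos: "0 < m"
    proof (rule ccontr)
      assume "\<not> 0 < m"
      hence "card DD = 1" using cardD by simp
      then obtain x where x: "DD = {x}" by (rule card_1_singletonE)
      hence DD1: "DD = {\<one>\<^bsub>G\<^esub>}" using D_one by simp
      have "h0 \<in> CC" using CI[OF h0(1)] DD1 h0(1) by simp
      thus False using h0(2) by blast
    qed
    obtain c where c: "c \<in> DD" "ord c = p ^ m" using D_gen by blast
    have Lc: "L41c G p m c" unfolding L41c_def L41c_axioms_def using L c m_pos by blast
    interpret L41c G p m c by (rule Lc)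
    define P where "P k \<longleftrightarrow> (\<exists>h\<in>carrier G. rho h \<noteq> 1 \<and> \<not> p ^ (k + 1) dvd rho h - 1)" for k
    have rh0: "rho h0 \<noteq> 1" using C_iff_rho[OF h0(1)] h0(2) by blast
    have "P (rho h0 - 1)"
    proof -
      define x where "x = rho h0 - 1"
      have x0: "0 < x" unfolding x_def using rh0 rho_pos[OF h0(1)] by simp
      have "x < 2 ^ x" by (rule less_exp)
      also have "\<dots> \<le> p ^ x" using p1 by (intro power_mono) auto
      also have "\<dots> < p ^ (x + 1)" using p1 by simp
      finally have "\<not> p ^ (x + 1) dvd x" using x0 by (auto dest: dvd_imp_le)
      thus ?thesis unfolding P_def x_def using h0(1) rh0 by blast
    qed
    define s where "s = (LEAST k. P k)"
    have Ps: "P s" unfolding s_def by (rule LeastI) fact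
    then obtain a where a: "a \<in> carrier G" "rho a \<noteq> 1" "\<not> p ^ (s + 1) dvd rho a - 1" unfolding P_def by blast
    have all_div: "p ^ s dvd rho h - 1" if h: "h \<in> carrier G" for h
    proof (cases "rho h = 1")
      case True then show ?thesis by simp
    next
      case False
      show ?thesis
      proof (cases s)
        case 0 then show ?thesis by simp
      next
        case (Suc s')
        have "s' < s" using Suc by simp
        hence "\<not> P s'" unfolding s_def by (rule not_less_Least)
        thus ?thesis using h False Suc unfolding P_def by auto
      qed
    qed
    obtain u where u: "rho a - 1 = p ^ s * u" using all_div[OF a(1)] by blast
    have u_nd: "\<not> p dvd u"
    proof
      assume "p dvd u"
      hence "p ^ (s + 1) dvd p ^ s * u" by simp
      thus False using a(3) u by simp
    qed
    have s_pos: "1 \<le> s"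
    proof (rule ccontr)
      assume "\<not> 1 \<le> s" hence s0: "s = 0" by simp
      have "rho a mod p = 1 mod p" using rho_mod_p[OF a(1)] p1 by simp
      hence "p dvd rho a - 1" using mod_eq_dvd_iff_nat[of 1 "rho a" p] rho_pos[OF a(1)] by simp
      thus False using a(3) s0 by simp
    qed
    have s_lt: "s < m"
    proof (rule ccontr)
      assume "\<not> s < m"
      hence "p ^ m dvd p ^ s" by (simp add: le_imp_power_dvd)
      hence "p ^ m dvd rho a - 1" using all_div[OF a(1)] dvd_trans by blast
      moreover have "0 < rho a - 1" using a(2) rho_pos[OF a(1)] by simp
      ultimately have "p ^ m \<le> rho a - 1" by (simp add: dvd_imp_le)
      thus False using rho_lt[OF a(1)] by simp
    qed
    have La: "L41a G p m c a s u" unfolding L41a_def L41a_axioms_def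
      using Lc a(1) u u_nd s_pos s_lt all_div by blast
    interpret L41a G p m c a s u by (rule La)
    have "p ^ t = p ^ s" using assms(8) T_card by simp
    hence ts: "t = s" using p1 by simp
    have part1: "CC = {g \<in> carrier G. g [^]\<^bsub>G\<^esub> (p ^ t) \<in> ZZ <#>\<^bsub>G\<^esub> DD}"
      unfolding ts using part1_sub part1_sup C_carr by blast
    have part2: "derived G CC = mho G p (m - t) DD" unfolding ts using derC_T mho_T by simp
    show ?thesis using part1 part2 P3 by blast
  qed
qed

end
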